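(* Let $p$ be a prime and $A,T$ countable $p$-groups with $A$ reduced. Then $\mathrm{Ext}(T,A)$ is a Polish group if and only if either $T^1=0$ or $A$ is bounded.
   Context: $T^1=\bigcap_{n\ge1}nT$ is the first Ulm subgroup; $A$ is reduced if it has no nonzero divisible subgroup, bounded if $nA=0$ for some $n\ge1$. $\mathrm{Ext}(T,A)=\mathsf Z(T,A)/\mathsf B(T,A)$ as a group with a Polish cover, where $\mathsf Z(T,A)$ is the Polish group (closed in $A^{T\times T}$, $A$ discrete) of functions $c:T\times T\to A$ with $c(x,0)=0$, $c(x,y)=c(y,x)$, $c(y,z)-c(x+y,z)+c(x,y+z)-c(x,y)=0$, and $\mathsf B(T,A)$ is the Polishable subgroup of coboundaries $c(x,y)=\phi(y)-\phi(x+y)+\phi(x)$ with $\phi(0)=0$. $\mathrm{Ext}(T,A)$ is a Polish group when $\mathsf B(T,A)$ is closed in $\mathsf Z(T,A)$. *)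

theory Defs
  imports "HOL-Analysis.Analysis" "HOL-Library.Countable"
begin

primrec nmul :: "nat \<Rightarrow> 'a::ab_group_add \<Rightarrow> 'a" where
  "nmul 0 x = 0"
| "nmul (Suc n) x = x + nmul n x"

definition p_group :: "nat \<Rightarrow> 'a::ab_group_add itself \<Rightarrow> bool" where
  "p_group p _ \<longleftrightarrow> prime p \<and> (\<forall>x::'a. \<exists>k. nmul (p ^ k) x = 0)"

definition is_subgroup :: "'a::ab_group_add set \<Rightarrow> bool" where
  "is_subgroup D \<longleftrightarrow> 0 \<in> D \<and> (\<forall>x\<in>D. \<forall>y\<in>D. x + y \<in> D) \<and> (\<forall>x\<in>D. - x \<in> D)"

definition divisible_set :: "'a::ab_group_add set \<Rightarrow> bool" where
  "divisible_set D \<longleftrightarrow> (\<forall>d\<in>D. \<forall>n::nat. n \<ge> 1 \<longrightarrow> (\<exists>e\<in>D. nmul n e = d))"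

definition reduced :: "'a::ab_group_add itself \<Rightarrow> bool" where
  "reduced _ \<longleftrightarrow> (\<forall>D::'a set. is_subgroup D \<and> divisible_set D \<longrightarrow> D = {0})"

definition bounded_grp :: "'a::ab_group_add itself \<Rightarrow> bool" where
  "bounded_grp _ \<longleftrightarrow> (\<exists>n::nat. n \<ge> 1 \<and> (\<forall>a::'a. nmul n a = 0))"

definition ulm1 :: "'a::ab_group_add set" where
  "ulm1 = (\<Inter>n\<in>{n::nat. n \<ge> 1}. range (nmul n))"

definition cocycles :: "('t::ab_group_add \<times> 't \<Rightarrow> 'a::ab_group_add) set" where
  "cocycles = {c. (\<forall>x. c (x, 0) = 0) \<and> (\<forall>x y. c (x, y) = c (y, x)) \<and>
     (\<forall>x y z. c (y, z) - c (x + y, z) + c (x, y + z) - c (x, y) = 0)}"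

definition coboundaries :: "('t::ab_group_add \<times> 't \<Rightarrow> 'a::ab_group_add) set" where
  "coboundaries = {c. \<exists>\<phi>. \<phi> 0 = 0 \<and> (\<forall>x y. c (x, y) = \<phi> y - \<phi> (x + y) + \<phi> x)}"

definition fun_top :: "('t \<times> 't \<Rightarrow> 'a) topology" where
  "fun_top = product_topology (\<lambda>_. discrete_topology UNIV) UNIV"

text \<open>Ext(T,A) = Z/B is a Polish group iff B is closed in Z (context convention).\<close>
definition Ext_polish :: "'t::ab_group_add itself \<Rightarrow> 'a::ab_group_add itself \<Rightarrow> bool" where
  "Ext_polish _ _ \<longleftrightarrow>
     closedin (subtopology (fun_top :: ('t \<times> 't \<Rightarrow> 'a) topology) (cocycles :: ('t \<times> 't \<Rightarrow> 'a) set))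
              (coboundaries :: ('t \<times> 't \<Rightarrow> 'a) set)"

end

theory Submission
  imports Defs
begin


definition locsplit :: "('t::ab_group_add \<times> 't \<Rightarrow> 'a::ab_group_add) \<Rightarrow> bool" where
  "locsplit c \<longleftrightarrow> (\<forall>F. finite F \<longrightarrow> (\<exists>\<phi>. \<phi> 0 = 0 \<and> (\<forall>x y. (x,y) \<in> F \<longrightarrow> c (x,y) = \<phi> y - \<phi> (x+y) + \<phi> x)))"

lemma openin_fun_top:
  "openin (fun_top :: ('t \<times> 't \<Rightarrow> 'a) topology) S \<longleftrightarrow>
    (\<forall>x\<in>S. \<exists>F. finite F \<and> (\<forall>y. (\<forall>i\<in>F. y i = x i) \<longrightarrow> y \<in> S))"
proof
  assume "openin (fun_top :: ('t \<times> 't \<Rightarrow> 'a) topology) S"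
  then have H: "\<forall>x\<in>S. \<exists>U. finite {i. U i \<noteq> UNIV} \<and> x \<in> Pi\<^sub>E UNIV U \<and> Pi\<^sub>E UNIV U \<subseteq> S"
    unfolding fun_top_def openin_product_topology_alt by simp
  show "\<forall>x\<in>S. \<exists>F. finite F \<and> (\<forall>y. (\<forall>i\<in>F. y i = x i) \<longrightarrow> y \<in> S)"
  proof
    fix x assume "x \<in> S"
    then obtain U where U: "finite {i. U i \<noteq> UNIV}" "x \<in> Pi\<^sub>E UNIV U" "Pi\<^sub>E UNIV U \<subseteq> S"
      using H by blast
    show "\<exists>F. finite F \<and> (\<forall>y. (\<forall>i\<in>F. y i = x i) \<longrightarrow> y \<in> S)"
    proof (intro exI conjI allI impI)
      fix y assume "\<forall>i\<in>{i. U i \<noteq> UNIV}. y i = x i"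
      then have "y \<in> Pi\<^sub>E UNIV U" using U(2) by (auto simp: PiE_iff) (metis UNIV_I)
      then show "y \<in> S" using U(3) by blast
    qed (use U in auto)
  qed
next
  assume H: "\<forall>x\<in>S. \<exists>F. finite F \<and> (\<forall>y. (\<forall>i\<in>F. y i = x i) \<longrightarrow> y \<in> S)"
  show "openin (fun_top :: ('t \<times> 't \<Rightarrow> 'a) topology) S"
    unfolding fun_top_def openin_product_topology_alt
  proof
    fix x assume "x \<in> S"
    then obtain F where F: "finite F" "\<forall>y. (\<forall>i\<in>F. y i = x i) \<longrightarrow> y \<in> S" using H by blast
    define U where "U = (\<lambda>i. if i \<in> F then {x i} else UNIV)"
    have "{i. U i \<noteq> UNIV} \<subseteq> F" by (auto simp: U_def)
    then have "finite {i. U i \<noteq> UNIV}" using F(1) finite_subset by blast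
    moreover have "x \<in> Pi\<^sub>E UNIV U" by (auto simp: U_def)
    moreover have "Pi\<^sub>E UNIV U \<subseteq> S"
    proof
      fix y assume "y \<in> Pi\<^sub>E UNIV U"
      then have "\<forall>i\<in>F. y i = x i" by (auto simp: U_def PiE_iff) (metis singletonD)
      then show "y \<in> S" using F(2) by blast
    qed
    ultimately show "\<exists>U. finite {i \<in> UNIV. U i \<noteq> topspace (discrete_topology UNIV)} \<and>
              (\<forall>i\<in>UNIV. openin (discrete_topology UNIV) (U i)) \<and> x \<in> Pi\<^sub>E UNIV U \<and> Pi\<^sub>E UNIV U \<subseteq> S"
      by auto
  qed
qed

lemma cob_locsplit: "c \<in> coboundaries \<Longrightarrow> locsplit c"
  unfolding coboundaries_def locsplit_def by blast

lemma Ext_polish_iff: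
  "Ext_polish TYPE('t::ab_group_add) TYPE('a::ab_group_add) \<longleftrightarrow>
   (\<forall>c::'t \<times> 't \<Rightarrow> 'a. c \<in> cocycles \<longrightarrow> locsplit c \<longrightarrow> c \<in> coboundaries)"
proof
  assume "Ext_polish TYPE('t) TYPE('a)"
  then obtain K where K: "closedin (fun_top :: ('t \<times> 't \<Rightarrow> 'a) topology) K"
     "(coboundaries :: ('t \<times> 't \<Rightarrow> 'a) set) = K \<inter> cocycles"
    unfolding Ext_polish_def closedin_subtopology by blast
  have top: "topspace (fun_top :: ('t \<times> 't \<Rightarrow> 'a) topology) = UNIV"
    by (simp add: fun_top_def)
  have op: "openin (fun_top :: ('t \<times> 't \<Rightarrow> 'a) topology) (UNIV - K)"
    using K(1) top by (simp add: closedin_def)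
  show "\<forall>c::'t \<times> 't \<Rightarrow> 'a. c \<in> cocycles \<longrightarrow> locsplit c \<longrightarrow> c \<in> coboundaries"
  proof (intro allI impI)
    fix c :: "'t \<times> 't \<Rightarrow> 'a" assume cz: "c \<in> cocycles" and ls: "locsplit c"
    show "c \<in> coboundaries"
    proof (rule ccontr)
      assume "c \<notin> coboundaries"
      then have "c \<in> UNIV - K" using K(2) cz by blast
      then obtain F where F: "finite F" "\<forall>y. (\<forall>i\<in>F. y i = c i) \<longrightarrow> y \<in> UNIV - K"
        using op unfolding openin_fun_top by blast
      obtain \<phi> where \<phi>: "\<phi> 0 = 0" "\<forall>x y. (x,y) \<in> F \<longrightarrow> c (x,y) = \<phi> y - \<phi> (x+y) + \<phi> x"
        using ls F(1) unfolding locsplit_def by blast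
      define d where "d = (\<lambda>(x,y). \<phi> y - \<phi> (x+y) + \<phi> x)"
      have "d \<in> coboundaries" unfolding coboundaries_def d_def using \<phi>(1) by auto
      then have "d \<in> K" using K(2) by blast
      moreover have "\<forall>i\<in>F. d i = c i" using \<phi>(2) by (auto simp: d_def)
      ultimately show False using F(2) by blast
    qed
  qed
next
  assume H: "\<forall>c::'t \<times> 't \<Rightarrow> 'a. c \<in> cocycles \<longrightarrow> locsplit c \<longrightarrow> c \<in> coboundaries"
  define K where "K = {c::'t \<times> 't \<Rightarrow> 'a. locsplit c}"
  have "openin (fun_top :: ('t \<times> 't \<Rightarrow> 'a) topology) (UNIV - K)"
    unfolding openin_fun_top
  proof
    fix c assume "c \<in> UNIV - K"
    then obtain F where F: "finite F" "\<not> (\<exists>\<phi>. \<phi> 0 = 0 \<and> (\<forall>x y. (x,y) \<in> F \<longrightarrow> c (x,y) = \<phi> y - \<phi> (x+y) + \<phi> x))"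
      by (auto simp: K_def locsplit_def)
    show "\<exists>F. finite F \<and> (\<forall>y. (\<forall>i\<in>F. y i = c i) \<longrightarrow> y \<in> UNIV - K)"
    proof (intro exI conjI allI impI)
      fix y assume "\<forall>i\<in>F. y i = c i"
      have "y \<notin> K"
      proof
        assume "y \<in> K"
        then obtain \<phi> where \<phi>: "\<phi> 0 = 0" "\<forall>x z. (x,z) \<in> F \<longrightarrow> y (x,z) = \<phi> z - \<phi> (x+z) + \<phi> x"
          using F(1) unfolding K_def locsplit_def by blast
        have "\<forall>x z. (x,z) \<in> F \<longrightarrow> c (x,z) = \<phi> z - \<phi> (x+z) + \<phi> x"
          using \<phi>(2) \<open>\<forall>i\<in>F. y i = c i\<close> by auto
        then show False using F(2) \<phi>(1) by blast
      qed
      then show "y \<in> UNIV - K" by simp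
    qed (use F in auto)
  qed
  then have "closedin (fun_top :: ('t \<times> 't \<Rightarrow> 'a) topology) K"
    by (simp add: closedin_def fun_top_def)
  moreover have "(coboundaries :: ('t \<times> 't \<Rightarrow> 'a) set) = K \<inter> cocycles"
  proof -
    have "(coboundaries :: ('t \<times> 't \<Rightarrow> 'a) set) \<subseteq> cocycles"
    proof
      fix d :: "'t \<times> 't \<Rightarrow> 'a" assume "d \<in> coboundaries"
      then obtain \<phi> where \<phi>: "\<phi> 0 = 0" "\<And>x y. d (x,y) = \<phi> y - \<phi> (x + y) + \<phi> x"
        unfolding coboundaries_def by blast
      show "d \<in> cocycles" unfolding cocycles_def
        by (auto simp: \<phi> algebra_simps add.commute)
    qed
    then show ?thesis using H cob_locsplit unfolding K_def by blast
  qed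
  ultimately show "Ext_polish TYPE('t) TYPE('a)"
    unfolding Ext_polish_def closedin_subtopology by blast
qed


lemma nmul_add: "nmul (m+n) x = nmul m x + nmul n x"
  by (induct m) (simp_all add: add.assoc)

lemma nmul_0[simp]: "nmul n 0 = 0"
  by (induct n) simp_all

lemma nmul_1[simp]: "nmul 1 x = x"
  by simp

lemma nmul_plus: "nmul n (x+y) = nmul n x + nmul n y"
  by (induct n) (simp_all add: algebra_simps)

lemma nmul_neg: "nmul n (-x) = - nmul n x"
  by (induct n) (simp_all add: algebra_simps)

lemma nmul_diff: "nmul n (x - y) = nmul n x - nmul n y"
  using nmul_plus[of n x "-y"] nmul_neg[of n y] by simp

lemma nmul_mult: "nmul (m*n) x = nmul m (nmul n x)"
  by (induct m) (simp_all add: nmul_add)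

lemma nmul_comm: "nmul m (nmul n x) = nmul n (nmul m x)"
  by (metis mult.commute nmul_mult)

lemma nmul_Suc_right: "nmul (Suc n) x = nmul n x + x"
  by (simp add: add.commute)

lemma is_subgroupD:
  assumes "is_subgroup S"
  shows "0 \<in> S" "x \<in> S \<Longrightarrow> y \<in> S \<Longrightarrow> x + y \<in> S" "x \<in> S \<Longrightarrow> - x \<in> S"
  using assms unfolding is_subgroup_def by auto

lemma subgroup_diff: "is_subgroup S \<Longrightarrow> x \<in> S \<Longrightarrow> y \<in> S \<Longrightarrow> x - y \<in> S"
  using is_subgroupD[of S] by (metis diff_conv_add_uminus)

lemma subgroup_nmul: "is_subgroup S \<Longrightarrow> x \<in> S \<Longrightarrow> nmul n x \<in> S"
  by (induct n) (auto dest: is_subgroupD)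

lemma subgroup_UNIV: "is_subgroup UNIV"
  by (simp add: is_subgroup_def)

lemma subgroup_range_nmul: "is_subgroup (range (nmul n))"
  unfolding is_subgroup_def
  by (auto simp: image_iff) (metis nmul_0, metis nmul_plus, metis nmul_neg)

lemma subgroup_image_nmul: "is_subgroup W \<Longrightarrow> is_subgroup (nmul n ` W)"
  unfolding is_subgroup_def
  by (auto simp: image_iff) (metis nmul_0, metis nmul_plus, metis nmul_neg)

lemma image_nmul_mono:
  assumes "is_subgroup W" "j \<le> k"
  shows "nmul ((p::nat)^k) ` W \<subseteq> nmul (p^j) ` W"
proof
  fix x assume "x \<in> nmul (p^k) ` W"
  then obtain w where w: "w \<in> W" "x = nmul (p^k) w" by blast
  have "p^k = p^j * p^(k-j)" using assms(2) by (simp add: power_add[symmetric])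
  then have "x = nmul (p^j) (nmul (p^(k-j)) w)" using w by (simp add: nmul_mult)
  moreover have "nmul (p^(k-j)) w \<in> W" using assms(1) w(1) subgroup_nmul by blast
  ultimately show "x \<in> nmul (p^j) ` W" by blast
qed

lemma inv_mod:
  assumes "prime (p::nat)" "\<not> p dvd k"
  shows "\<exists>k' q. k * k' = Suc (q * p^j)"
proof -
  have k0: "k \<noteq> 0" using assms(2) by (metis dvd_0_right)
  have "coprime k p" using prime_imp_coprime[OF assms] by (simp add: coprime_commute)
  then have "coprime k (p^j)" by simp
  then have g: "gcd k (p^j) = 1" by simp
  obtain x y where "k * x = p^j * y + gcd k (p^j)" using bezout_nat[OF k0] by blast
  then have "k * x = Suc (y * p^j)" using g by simp
  then show ?thesis by blast
qed

lemma coprime_in_subgroup: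
  assumes "prime (p::nat)" "\<not> p dvd k" "is_subgroup S" "nmul p x \<in> S" "nmul k x \<in> S"
  shows "x \<in> S"
proof -
  obtain k' q where kq: "k * k' = Suc (q * p^1)" using inv_mod[OF assms(1,2)] by blast
  have "nmul k' (nmul k x) = nmul (k * k') x" by (metis nmul_mult mult.commute)
  also have "\<dots> = x + nmul q (nmul p x)" using kq by (simp add: nmul_mult)
  finally have "x = nmul k' (nmul k x) - nmul q (nmul p x)" by (simp add: algebra_simps)
  then show ?thesis using assms(3-5) by (metis subgroup_diff subgroup_nmul)
qed


definition eadd :: "('t::ab_group_add \<times> 't \<Rightarrow> 'a::ab_group_add) \<Rightarrow> 'a \<times> 't \<Rightarrow> 'a \<times> 't \<Rightarrow> 'a \<times> 't" where
  "eadd c e f = (fst e + fst f + c (snd e, snd f), snd e + snd f)"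

definition eneg :: "('t::ab_group_add \<times> 't \<Rightarrow> 'a::ab_group_add) \<Rightarrow> 'a \<times> 't \<Rightarrow> 'a \<times> 't" where
  "eneg c e = (- fst e - c (snd e, - snd e), - snd e)"

primrec emul :: "('t::ab_group_add \<times> 't \<Rightarrow> 'a::ab_group_add) \<Rightarrow> nat \<Rightarrow> 'a \<times> 't \<Rightarrow> 'a \<times> 't" where
  "emul c 0 e = (0, 0)"
| "emul c (Suc n) e = eadd c e (emul c n e)"

definition sec_on :: "('t::ab_group_add \<times> 't \<Rightarrow> 'a::ab_group_add) \<Rightarrow> 't set \<Rightarrow> ('t \<Rightarrow> 'a \<times> 't) \<Rightarrow> bool" where
  "sec_on c S \<sigma> \<longleftrightarrow> (\<forall>v\<in>S. snd (\<sigma> v) = v) \<and> (\<forall>u\<in>S. \<forall>v\<in>S. \<sigma> (u + v) = eadd c (\<sigma> u) (\<sigma> v))"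

definition adj :: "'t::ab_group_add set \<Rightarrow> 't \<Rightarrow> 't set" where
  "adj S x = {v + nmul i x | v i. v \<in> S}"

locale cocyc =
  fixes c :: "'t::ab_group_add \<times> 't \<Rightarrow> 'a::ab_group_add"
  assumes c_x0: "c (x, 0) = 0"
    and c_sym: "c (x, y) = c (y, x)"
    and c_coc: "c (y, z) - c (x + y, z) + c (x, y + z) - c (x, y) = 0"
begin

lemma c_0x: "c (0, x) = 0" using c_x0 c_sym by metis

lemma c_coc': "c (x, y) + c (x + y, z) = c (x, y + z) + c (y, z)"
  using c_coc[of y z x] by (simp add: algebra_simps)


abbreviation ea (infixl "\<oplus>" 65) where "e \<oplus> f \<equiv> eadd c e f"
abbreviation en ("\<ominus>") where "\<ominus> e \<equiv> eneg c e"
abbreviation em where "em n e \<equiv> emul c n e"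

lemma snd_eadd[simp]: "snd (e \<oplus> f) = snd e + snd f" by (simp add: eadd_def)
lemma snd_eneg[simp]: "snd (\<ominus> e) = - snd e" by (simp add: eneg_def)
lemma snd_emul[simp]: "snd (em n e) = nmul n (snd e)"
  by (induct n) simp_all

lemma eadd_assoc: "(e \<oplus> f) \<oplus> g = e \<oplus> (f \<oplus> g)"
  using c_coc'[of "snd e" "snd f" "snd g"]
  by (simp add: eadd_def algebra_simps)

lemma eadd_comm: "e \<oplus> f = f \<oplus> e"
  by (simp add: eadd_def algebra_simps c_sym[of "snd e"])

lemma eadd_left_comm: "e \<oplus> (f \<oplus> g) = f \<oplus> (e \<oplus> g)"
  by (metis eadd_assoc eadd_comm)

lemmas eadd_ac = eadd_assoc eadd_comm eadd_left_comm

lemma eadd_0_left[simp]: "(0,0) \<oplus> e = e" by (simp add: eadd_def c_0x)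
lemma eadd_0_right[simp]: "e \<oplus> (0,0) = e" by (simp add: eadd_def c_x0)
lemma eadd_neg_right[simp]: "e \<oplus> (\<ominus> e) = (0,0)" by (simp add: eadd_def eneg_def)
lemma eadd_neg_left[simp]: "(\<ominus> e) \<oplus> e = (0,0)" by (metis eadd_comm eadd_neg_right)

lemma eadd_neg_cancel1[simp]: "e \<oplus> ((\<ominus> e) \<oplus> f) = f"
  by (metis eadd_assoc eadd_neg_right eadd_0_left)
lemma eadd_neg_cancel2[simp]: "(\<ominus> e) \<oplus> (e \<oplus> f) = f"
  by (metis eadd_assoc eadd_neg_left eadd_0_left)

lemma eadd_left_cancel[simp]: "e \<oplus> f = e \<oplus> g \<longleftrightarrow> f = g"
  by (metis eadd_neg_cancel2)

lemma eadd_eq_iff: "e \<oplus> f = g \<longleftrightarrow> f = (\<ominus> e) \<oplus> g"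
  by (metis eadd_neg_cancel1 eadd_neg_cancel2)

lemma eneg_eneg[simp]: "\<ominus> (\<ominus> e) = e"
  by (metis eadd_neg_right eadd_neg_left eadd_eq_iff eadd_0_right)

lemma eneg_eadd: "\<ominus> (e \<oplus> f) = (\<ominus> e) \<oplus> (\<ominus> f)"
proof -
  have "(e \<oplus> f) \<oplus> ((\<ominus> e) \<oplus> (\<ominus> f)) = (0,0)"
    by (metis eadd_assoc eadd_left_comm eadd_neg_cancel1 eadd_neg_right)
  then show ?thesis by (metis eadd_eq_iff eadd_0_right)
qed

lemma eneg_0[simp]: "\<ominus> (0,0) = (0,0)"
  by (metis eadd_0_left eadd_neg_right)

lemma inA_add[simp]: "(a,0) \<oplus> (b,0) = (a+b, 0)" by (simp add: eadd_def c_x0)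
lemma inA_add_T: "(a,0) \<oplus> (b,x) = (a+b, x)" by (simp add: eadd_def c_0x)
lemma inA_neg[simp]: "\<ominus> (a,0) = (-a, 0)" by (simp add: eneg_def c_x0)
lemma split_e: "e = (fst e, 0) \<oplus> (0, snd e)" by (simp add: eadd_def c_0x)

lemma emul_0[simp]: "em n (0,0) = (0,0)" by (induct n) simp_all
lemma emul_1[simp]: "em 1 e = e" by simp
lemma emul_add: "em (m + n) e = em m e \<oplus> em n e"
  by (induct m) (simp_all add: eadd_assoc)
lemma emul_distrib: "em n (e \<oplus> f) = em n e \<oplus> em n f"
  by (induct n) (simp_all add: eadd_ac)
lemma emul_mult: "em (m * n) e = em m (em n e)"
  by (induct m) (simp_all add: emul_add emul_distrib)
lemma emul_eneg: "em n (\<ominus> e) = \<ominus> (em n e)"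
  by (induct n) (simp_all add: eneg_eadd)
lemma emul_inA[simp]: "em n (a,0) = (nmul n a, 0)"
  by (induct n) simp_all

end

lemma cocycles_cocyc: "c \<in> cocycles \<Longrightarrow> cocyc c"
  unfolding cocycles_def cocyc_def by blast

lemma zero_cocyc: "cocyc (\<lambda>_. 0)"
  by (simp add: cocyc_def)


lemma adj_mem: "v \<in> S \<Longrightarrow> v + nmul i x \<in> adj S x"
  unfolding adj_def by blast

lemma adj_sub: "is_subgroup S \<Longrightarrow> S \<subseteq> adj S x"
  using adj_mem[of _ S 0 x] by auto

lemma adj_x: "is_subgroup S \<Longrightarrow> x \<in> adj S x"
proof -
  assume "is_subgroup S"
  then have "0 \<in> S" by (rule is_subgroupD(1))
  then have "0 + nmul 1 x \<in> adj S x" by (rule adj_mem)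
  then show ?thesis by simp
qed


lemma adj_subgroup:
  assumes S: "is_subgroup S" and px: "nmul p x \<in> S" and p: "p > 0"
  shows "is_subgroup (adj S x)"
  unfolding is_subgroup_def
proof (intro conjI ballI)
  show "0 \<in> adj S x" using adj_sub[OF S] is_subgroupD(1)[OF S] by blast
next
  fix a b assume "a \<in> adj S x" "b \<in> adj S x"
  then obtain v i v' i' where "v \<in> S" "a = v + nmul i x" "v' \<in> S" "b = v' + nmul i' x"
    unfolding adj_def by blast
  then have "a + b = (v + v') + nmul (i + i') x" by (simp add: nmul_add algebra_simps)
  then show "a + b \<in> adj S x" using adj_mem is_subgroupD(2)[OF S] \<open>v \<in> S\<close> \<open>v' \<in> S\<close> by metis
next
  fix a assume "a \<in> adj S x"
  then obtain v i where v: "v \<in> S" "a = v + nmul i x" unfolding adj_def by blast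
  have "nmul i (nmul p x) = nmul (i * (p - 1) + i) x"
  proof -
    have "i * p = i * (p - 1) + i" using p by (cases p) (simp_all add: algebra_simps)
    then show ?thesis by (metis nmul_mult)
  qed
  then have "nmul i (nmul p x) = nmul (i * (p - 1)) x + nmul i x" by (simp add: nmul_add)
  then have "- a = (- v - nmul i (nmul p x)) + nmul (i * (p - 1)) x"
    using v by (simp add: algebra_simps)
  moreover have "- v - nmul i (nmul p x) \<in> S"
    using S v(1) px by (meson is_subgroupD(3) subgroup_diff subgroup_nmul)
  ultimately show "- a \<in> adj S x" using adj_mem by metis
qed

lemma adj_finite:
  assumes S: "finite S" "is_subgroup S" and px: "nmul p x \<in> S" and p: "p > 0"
  shows "finite (adj S x)"
proof -
  have "adj S x \<subseteq> (\<lambda>(v,i). v + nmul i x) ` (S \<times> {..<p})"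
  proof
    fix a assume "a \<in> adj S x"
    then obtain v i where v: "v \<in> S" "a = v + nmul i x" unfolding adj_def by blast
    have "i = (i div p) * p + i mod p" by simp
    then have "nmul i x = nmul ((i div p) * p) x + nmul (i mod p) x"
      by (metis nmul_add)
    then have "nmul i x = nmul (i div p) (nmul p x) + nmul (i mod p) x"
      by (simp only: nmul_mult)
    then have "a = (v + nmul (i div p) (nmul p x)) + nmul (i mod p) x" using v by (simp add: add.assoc)
    moreover have "v + nmul (i div p) (nmul p x) \<in> S" using S(2) v(1) px
      by (meson is_subgroupD(2) subgroup_nmul)
    moreover have "i mod p < p" using p by simp
    ultimately show "a \<in> (\<lambda>(v,i). v + nmul i x) ` (S \<times> {..<p})" by force
  qed
  then show ?thesis using finite_subset S(1) by blast
qed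

context cocyc begin

lemma sec_snd: "sec_on c S \<sigma> \<Longrightarrow> v \<in> S \<Longrightarrow> snd (\<sigma> v) = v"
  unfolding sec_on_def by blast

lemma sec_add: "sec_on c S \<sigma> \<Longrightarrow> u \<in> S \<Longrightarrow> v \<in> S \<Longrightarrow> \<sigma> (u + v) = \<sigma> u \<oplus> \<sigma> v"
  unfolding sec_on_def by blast

lemma sec_0: "sec_on c S \<sigma> \<Longrightarrow> is_subgroup S \<Longrightarrow> \<sigma> 0 = (0,0)"
  using sec_add[of S \<sigma> 0 0] is_subgroupD(1)[of S]
  by (metis add_0 eadd_0_right eadd_left_cancel)

lemma sec_nmul: "sec_on c S \<sigma> \<Longrightarrow> is_subgroup S \<Longrightarrow> v \<in> S \<Longrightarrow> \<sigma> (nmul n v) = em n (\<sigma> v)"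
proof (induct n)
  case 0 then show ?case by (simp add: sec_0)
next
  case (Suc n)
  have "nmul n v \<in> S" using Suc subgroup_nmul by blast
  then show ?case using Suc sec_add[of S \<sigma> v "nmul n v"] by simp
qed

lemma sec_neg: "sec_on c S \<sigma> \<Longrightarrow> is_subgroup S \<Longrightarrow> v \<in> S \<Longrightarrow> \<sigma> (- v) = \<ominus> (\<sigma> v)"
  using sec_add[of S \<sigma> v "-v"] sec_0[of S \<sigma>] is_subgroupD(3)[of S v]
  by (metis add.right_inverse eadd_eq_iff eadd_0_right)

lemma sec_diff: "sec_on c S \<sigma> \<Longrightarrow> is_subgroup S \<Longrightarrow> u \<in> S \<Longrightarrow> v \<in> S \<Longrightarrow> \<sigma> (u - v) = \<sigma> u \<oplus> \<ominus> (\<sigma> v)"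
  by (metis diff_conv_add_uminus is_subgroupD(3) sec_add sec_neg)

lemma adj_welldef:
  assumes S: "is_subgroup S" "sec_on c S \<sigma>" and x: "x \<notin> S" "nmul p x \<in> S" "prime p"
    and e: "em p e = \<sigma> (nmul p x)"
    and v: "v \<in> S" "v' \<in> S" "v + nmul i x = v' + nmul i' x" and le: "i' \<le> i"
  shows "\<sigma> v \<oplus> em i e = \<sigma> v' \<oplus> em i' e"
proof -
  define k where "k = i - i'"
  have ik: "i = k + i'" using le by (simp add: k_def)
  have kx: "nmul k x = v' - v" using v(3) by (simp add: ik nmul_add algebra_simps)
  then have kxS: "nmul k x \<in> S" using S(1) v by (simp add: subgroup_diff)
  have "p dvd k"
  proof (rule ccontr)
    assume "\<not> p dvd k"
    then have "x \<in> S" using coprime_in_subgroup[OF x(3) _ S(1) x(2) kxS] by blast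
    then show False using x(1) by blast
  qed
  then obtain q where q: "k = q * p" by (metis dvd_def mult.commute)
  have "em k e = em q (\<sigma> (nmul p x))" by (simp add: q emul_mult e)
  also have "\<dots> = \<sigma> (nmul q (nmul p x))" using sec_nmul[OF S(2) S(1) x(2)] by simp
  also have "\<dots> = \<sigma> (v' - v)" using kx q by (simp add: nmul_mult)
  finally have ek: "em k e = \<sigma> (v' - v)" .
  have "\<sigma> v \<oplus> em i e = (\<sigma> v \<oplus> \<sigma> (v' - v)) \<oplus> em i' e"
    by (simp add: ik emul_add ek eadd_assoc)
  also have "\<sigma> v \<oplus> \<sigma> (v' - v) = \<sigma> v'"
    using sec_add[OF S(2) v(1), of "v' - v"] S(1) v by (simp add: subgroup_diff)
  finally show ?thesis .
qed

lemma adjoin: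
  assumes S: "is_subgroup S" "sec_on c S \<sigma>" and x: "x \<notin> S" "nmul p x \<in> S" "prime p"
    and e: "snd e = x" "em p e = \<sigma> (nmul p x)"
  obtains \<sigma>' where "sec_on c (adj S x) \<sigma>'" "\<forall>v\<in>S. \<sigma>' v = \<sigma> v"
    "\<forall>v\<in>S. \<forall>i. \<sigma>' (v + nmul i x) = \<sigma> v \<oplus> em i e"
proof -
  have wd: "\<sigma> v \<oplus> em i e = \<sigma> v' \<oplus> em i' e"
    if "v \<in> S" "v' \<in> S" "v + nmul i x = v' + nmul i' x" for v v' i i'
  proof (cases "i' \<le> i")
    case True then show ?thesis using adj_welldef[OF S x e(2)] that by blast
  next
    case False
    then show ?thesis using adj_welldef[OF S x e(2), of v' v i' i] that by simp
  qed
  define \<sigma>' where "\<sigma>' u = (SOME f. \<exists>v i. v \<in> S \<and> u = v + nmul i x \<and> f = \<sigma> v \<oplus> em i e)" for u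
  have val: "\<sigma>' (v + nmul i x) = \<sigma> v \<oplus> em i e" if "v \<in> S" for v i
  proof -
    have "\<exists>f. \<exists>v' i'. v' \<in> S \<and> v + nmul i x = v' + nmul i' x \<and> f = \<sigma> v' \<oplus> em i' e"
      using that by blast
    then have "\<exists>v' i'. v' \<in> S \<and> v + nmul i x = v' + nmul i' x \<and> \<sigma>' (v + nmul i x) = \<sigma> v' \<oplus> em i' e"
      unfolding \<sigma>'_def by (rule someI_ex)
    then show ?thesis using wd that by metis
  qed
  have sec': "sec_on c (adj S x) \<sigma>'"
    unfolding sec_on_def
  proof (intro conjI ballI)
    fix u assume "u \<in> adj S x"
    then obtain v i where v: "v \<in> S" "u = v + nmul i x" unfolding adj_def by blast
    show "snd (\<sigma>' u) = u" using v val sec_snd[OF S(2)] e(1) by simp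
  next
    fix u w assume "u \<in> adj S x" "w \<in> adj S x"
    then obtain v i v' i' where v: "v \<in> S" "u = v + nmul i x" "v' \<in> S" "w = v' + nmul i' x"
      unfolding adj_def by blast
    have "u + w = (v + v') + nmul (i + i') x" using v by (simp add: nmul_add algebra_simps)
    then have "\<sigma>' (u + w) = \<sigma> (v + v') \<oplus> em (i + i') e"
      using val is_subgroupD(2)[OF S(1) v(1) v(3)] by simp
    also have "\<dots> = (\<sigma> v \<oplus> em i e) \<oplus> (\<sigma> v' \<oplus> em i' e)"
      using sec_add[OF S(2) v(1) v(3)] by (simp add: emul_add eadd_ac)
    finally show "\<sigma>' (u + w) = \<sigma>' u \<oplus> \<sigma>' w" using val v by simp
  qed
  have "\<forall>v\<in>S. \<sigma>' v = \<sigma> v" using val[of _ 0] by simp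
  moreover have "\<forall>v\<in>S. \<forall>i. \<sigma>' (v + nmul i x) = \<sigma> v \<oplus> em i e" using val by blast
  ultimately show ?thesis using that sec' by blast
qed

end


lemma chain_ext:
  fixes Q :: "'t::{ab_group_add,countable} set \<Rightarrow> ('t \<Rightarrow> 'e) \<Rightarrow> bool"
  assumes W: "is_subgroup W" and tors: "\<forall>t::'t. \<exists>k. nmul (p^k) t = 0" and pr: "prime p"
   and Q0: "Q S0 \<sigma>0"
   and QS: "\<And>S \<sigma>. Q S \<sigma> \<Longrightarrow> is_subgroup S \<and> S \<subseteq> W"
   and step: "\<And>S \<sigma> x. Q S \<sigma> \<Longrightarrow> x \<in> W \<Longrightarrow> x \<notin> S \<Longrightarrow> nmul p x \<in> S \<Longrightarrow>
        \<exists>\<sigma>'. Q (adj S x) \<sigma>' \<and> (\<forall>v\<in>S. \<sigma>' v = \<sigma> v)"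
  shows "\<exists>\<sigma>. (\<forall>v\<in>S0. \<sigma> v = \<sigma>0 v) \<and>
     (\<forall>F. finite F \<longrightarrow> F \<subseteq> W \<longrightarrow> (\<exists>S \<sigma>'. Q S \<sigma>' \<and> F \<subseteq> S \<and> (\<forall>v\<in>F. \<sigma> v = \<sigma>' v)))"
proof -
  have one_step: "\<And>S \<sigma>. nmul (p^r) t \<in> S \<Longrightarrow> Q S \<sigma> \<Longrightarrow>
       \<exists>S' \<sigma>'. Q S' \<sigma>' \<and> S \<subseteq> S' \<and> t \<in> S' \<and> (\<forall>v\<in>S. \<sigma>' v = \<sigma> v)"
    if t: "t \<in> W" for r t
  proof (induct r)
    case 0
    then show ?case by auto
  next
    case (Suc r)
    define x where "x = nmul (p^r) t"
    show ?case
    proof (cases "x \<in> S")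
      case True
      then show ?thesis using Suc(1)[of S \<sigma>] Suc(3) by (simp add: x_def)
    next
      case False
      have px: "nmul p x \<in> S" using Suc(2) by (simp add: x_def nmul_mult[symmetric])
      have xW: "x \<in> W" using W t by (simp add: x_def subgroup_nmul)
      obtain \<sigma>1 where s1: "Q (adj S x) \<sigma>1" "\<forall>v\<in>S. \<sigma>1 v = \<sigma> v"
        using step[OF Suc(3) xW False px] by blast
      have sg: "is_subgroup S" using QS Suc(3) by blast
      have "x \<in> adj S x" using adj_x[OF sg] .
      then obtain S' \<sigma>' where r: "Q S' \<sigma>'" "adj S x \<subseteq> S'" "t \<in> S'" "\<forall>v\<in>adj S x. \<sigma>' v = \<sigma>1 v"
        using Suc(1)[of "adj S x" \<sigma>1] s1(1) by (auto simp: x_def)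
      have "S \<subseteq> adj S x" using adj_sub[OF sg] .
      then show ?thesis using r s1(2) by (intro exI[of _ S'] exI[of _ \<sigma>']) auto
    qed
  qed
  have ext: "\<exists>S' \<sigma>'. Q S' \<sigma>' \<and> S \<subseteq> S' \<and> t \<in> S' \<and> (\<forall>v\<in>S. \<sigma>' v = \<sigma> v)"
    if "Q S \<sigma>" "t \<in> W" for S \<sigma> t
  proof -
    obtain k where "nmul (p^k) t = 0" using tors by blast
    moreover have "0 \<in> S" using QS[OF that(1)] is_subgroupD(1) by blast
    ultimately show ?thesis
      using one_step[OF that(2), of k S \<sigma>] that(1) by metis
  qed
  define nxt where "nxt = (\<lambda>(S, \<sigma>) (t::'t). if t \<in> W \<and> Q S \<sigma> then
      (SOME (S', \<sigma>'). Q S' \<sigma>' \<and> S \<subseteq> S' \<and> t \<in> S' \<and> (\<forall>v\<in>S. \<sigma>' v = \<sigma> v)) else (S, \<sigma>))"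
  have nxt: "Q (fst (nxt (S,\<sigma>) t)) (snd (nxt (S,\<sigma>) t)) \<and> S \<subseteq> fst (nxt (S,\<sigma>) t) \<and>
      (t \<in> W \<longrightarrow> t \<in> fst (nxt (S,\<sigma>) t)) \<and> (\<forall>v\<in>S. snd (nxt (S,\<sigma>) t) v = \<sigma> v)"
    if "Q S \<sigma>" for S \<sigma> t
  proof (cases "t \<in> W")
    case True
    then have "\<exists>X. (case X of (S', \<sigma>') \<Rightarrow> Q S' \<sigma>' \<and> S \<subseteq> S' \<and> t \<in> S' \<and> (\<forall>v\<in>S. \<sigma>' v = \<sigma> v))"
      using ext[OF that True] by auto
    then have "case nxt (S,\<sigma>) t of (S', \<sigma>') \<Rightarrow> Q S' \<sigma>' \<and> S \<subseteq> S' \<and> t \<in> S' \<and> (\<forall>v\<in>S. \<sigma>' v = \<sigma> v)"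
      unfolding nxt_def using True that by (simp add: someI_ex)
    then show ?thesis by (cases "nxt (S,\<sigma>) t") auto
  next
    case False
    then show ?thesis using that by (simp add: nxt_def)
  qed
  define sq where "sq = rec_nat (S0, \<sigma>0) (\<lambda>n X. nxt X (from_nat n))"
  have sq0: "sq 0 = (S0, \<sigma>0)" by (simp add: sq_def)
  have sqS: "sq (Suc n) = nxt (sq n) (from_nat n)" for n by (simp add: sq_def)
  have Qn: "Q (fst (sq n)) (snd (sq n))" for n
  proof (induct n)
    case 0 then show ?case using Q0 sq0 by simp
  next
    case (Suc n) then show ?case using nxt[of "fst (sq n)" "snd (sq n)"] sqS[of n] by simp
  qed
  have one: "fst (sq n) \<subseteq> fst (sq (Suc n)) \<and> (\<forall>v\<in>fst (sq n). snd (sq (Suc n)) v = snd (sq n) v)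
       \<and> (from_nat n \<in> W \<longrightarrow> from_nat n \<in> fst (sq (Suc n)))" for n
    using nxt[OF Qn[of n], of "from_nat n"] sqS[of n] by simp
  have mono: "fst (sq m) \<subseteq> fst (sq (m + k)) \<and> (\<forall>v\<in>fst (sq m). snd (sq (m + k)) v = snd (sq m) v)" for m k
  proof (induct k)
    case 0 then show ?case by simp
  next
    case (Suc k) then show ?case using one[of "m + k"] by auto
  qed
  have mono': "fst (sq m) \<subseteq> fst (sq n) \<and> (\<forall>v\<in>fst (sq m). snd (sq n) v = snd (sq m) v)" if "m \<le> n" for m n
    using mono[of m "n - m"] that by simp
  define \<sigma> where "\<sigma> v = snd (sq (Suc (to_nat v))) v" for v
  have inS: "v \<in> W \<Longrightarrow> v \<in> fst (sq (Suc (to_nat v)))" for v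
    using one[of "to_nat v"] by simp
  show ?thesis
  proof (intro exI[of _ \<sigma>] conjI allI impI ballI)
    fix v assume "v \<in> S0"
    then show "\<sigma> v = \<sigma>0 v" using mono'[of 0 "Suc (to_nat v)"] sq0 by (simp add: \<sigma>_def)
  next
    fix F :: "'t set" assume F: "finite F" "F \<subseteq> W"
    define N where "N = Max (insert 0 ((\<lambda>v. Suc (to_nat v)) ` F))"
    have le: "Suc (to_nat v) \<le> N" if "v \<in> F" for v
      using F(1) that by (simp add: N_def)
    have "F \<subseteq> fst (sq N)"
    proof
      fix v assume "v \<in> F"
      then show "v \<in> fst (sq N)" using inS[of v] F(2) mono'[OF le[of v]] by blast
    qed
    moreover have "\<forall>v\<in>F. \<sigma> v = snd (sq N) v"
    proof
      fix v assume "v \<in> F"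
      then show "\<sigma> v = snd (sq N) v" using inS[of v] F(2) mono'[OF le[of v]] by (auto simp: \<sigma>_def)
    qed
    ultimately show "\<exists>S \<sigma>'. Q S \<sigma>' \<and> F \<subseteq> S \<and> (\<forall>v\<in>F. \<sigma> v = \<sigma>' v)"
      using Qn[of N] by blast
  qed
qed


definition PW :: "('t::ab_group_add \<times> 't \<Rightarrow> 'a::ab_group_add) \<Rightarrow> nat \<Rightarrow> 't set \<Rightarrow> nat \<Rightarrow> ('a \<times> 't) set" where
  "PW c p W j = {emul c (p^j) e | e. snd e \<in> W}"

definition pure_on :: "('t::ab_group_add \<times> 't \<Rightarrow> 'a::ab_group_add) \<Rightarrow> nat \<Rightarrow> 't set \<Rightarrow> bool" where
  "pure_on c p W \<longleftrightarrow> (\<forall>a j. (a, 0) \<in> PW c p W j \<longrightarrow> a \<in> range (nmul (p^j)))"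

definition Inv1 :: "('t::ab_group_add \<times> 't \<Rightarrow> 'a::ab_group_add) \<Rightarrow> nat \<Rightarrow> 't set \<Rightarrow> 't set \<Rightarrow> ('t \<Rightarrow> 'a \<times> 't) \<Rightarrow> bool" where
  "Inv1 c p W S \<sigma> \<longleftrightarrow> (\<forall>v\<in>S. \<forall>j. v \<in> nmul (p^j) ` W \<longrightarrow> \<sigma> v \<in> PW c p W j)"

lemma ht_iff:
  assumes W: "is_subgroup W" and ex: "\<exists>j. w \<notin> nmul ((p::nat)^j) ` W"
  shows "w \<in> nmul (p^j) ` W \<longleftrightarrow> j < (LEAST j. w \<notin> nmul (p^j) ` W)"
proof
  assume "w \<in> nmul (p^j) ` W"
  show "j < (LEAST j. w \<notin> nmul (p^j) ` W)"
  proof (rule ccontr)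
    assume "\<not> ?thesis"
    then have "(LEAST j. w \<notin> nmul (p^j) ` W) \<le> j" by simp
    then have "nmul (p^j) ` W \<subseteq> nmul (p^(LEAST j. w \<notin> nmul (p^j) ` W)) ` W"
      using image_nmul_mono[OF W] by blast
    moreover have "w \<notin> nmul (p^(LEAST j. w \<notin> nmul (p^j) ` W)) ` W"
      using LeastI_ex[OF ex] .
    ultimately show False using \<open>w \<in> nmul (p^j) ` W\<close> by blast
  qed
next
  assume "j < (LEAST j. w \<notin> nmul (p^j) ` W)"
  then show "w \<in> nmul (p^j) ` W" using not_less_Least by blast
qed

lemma image_nmul_1: "nmul 1 ` W = W" by simp

context cocyc begin

lemma eadd_neg_cancel3[simp]: "e \<oplus> (f \<oplus> \<ominus> e) = f"
  by (metis eadd_left_comm eadd_neg_right eadd_0_right)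

lemma eadd_neg_cancel4[simp]: "e \<oplus> f \<oplus> \<ominus> e = f"
  by (metis eadd_assoc eadd_neg_cancel3)

lemma PW_add: "e \<in> PW c p W j \<Longrightarrow> f \<in> PW c p W j \<Longrightarrow> is_subgroup W \<Longrightarrow> e \<oplus> f \<in> PW c p W j"
  unfolding PW_def
proof clarify
  fix e' f' :: "'a \<times> 't" assume "snd e' \<in> W" "snd f' \<in> W" "is_subgroup W"
  then have "snd (e' \<oplus> f') \<in> W" by (simp add: is_subgroupD(2))
  then show "\<exists>g. em (p^j) e' \<oplus> em (p^j) f' = em (p^j) g \<and> snd g \<in> W"
    by (intro exI[of _ "e' \<oplus> f'"]) (simp add: emul_distrib)
qed

lemma PW_neg: "e \<in> PW c p W j \<Longrightarrow> is_subgroup W \<Longrightarrow> \<ominus> e \<in> PW c p W j"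
  unfolding PW_def
proof clarify
  fix e' :: "'a \<times> 't" assume "snd e' \<in> W" "is_subgroup W"
  then have "snd (\<ominus> e') \<in> W" by (simp add: is_subgroupD(3))
  then show "\<exists>g. \<ominus> (em (p^j) e') = em (p^j) g \<and> snd g \<in> W"
    by (intro exI[of _ "\<ominus> e'"]) (simp add: emul_eneg)
qed

lemma PW_emul: "e \<in> PW c p W j \<Longrightarrow> is_subgroup W \<Longrightarrow> em n e \<in> PW c p W j"
  unfolding PW_def
proof clarify
  fix e' :: "'a \<times> 't" assume "snd e' \<in> W" "is_subgroup W"
  then have "snd (em n e') \<in> W" by (simp add: subgroup_nmul)
  then show "\<exists>g. em n (em (p^j) e') = em (p^j) g \<and> snd g \<in> W"
    by (intro exI[of _ "em n e'"]) (simp add: emul_mult[symmetric] mult.commute)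
qed

lemma PW_in: "snd e \<in> W \<Longrightarrow> em (p^j) e \<in> PW c p W j"
  unfolding PW_def by blast

lemma PW_zero: "is_subgroup W \<Longrightarrow> (0,0) \<in> PW c p W j"
  using PW_in[of "(0,0)" W p j] by (simp add: is_subgroupD(1))

lemma PW_mono: "j \<le> k \<Longrightarrow> is_subgroup W \<Longrightarrow> PW c p W k \<subseteq> PW c p W j"
proof
  fix f assume jk: "j \<le> k" and W: "is_subgroup W" and f: "f \<in> PW c p W k"
  then obtain e where e: "snd e \<in> W" "f = em (p^k) e" unfolding PW_def by blast
  have "p^k = p^j * p^(k-j)" using jk by (simp add: power_add[symmetric])
  then have "f = em (p^j) (em (p^(k-j)) e)" using e by (simp add: emul_mult)
  moreover have "snd (em (p^(k-j)) e) \<in> W" using W e by (simp add: subgroup_nmul)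
  ultimately show "f \<in> PW c p W j" unfolding PW_def by blast
qed

lemma Q1_step:
  assumes W: "is_subgroup W" and pr: "prime p"
    and pure: "pure_on c p W"
    and hW: "\<forall>w\<in>W. w \<noteq> 0 \<longrightarrow> (\<exists>j. w \<notin> nmul (p^j) ` W)"
    and S: "finite S" "is_subgroup S" "S \<subseteq> W" "sec_on c S \<sigma>" "Inv1 c p W S \<sigma>"
    and x: "x \<in> W" "x \<notin> S" "nmul p x \<in> S"
  shows "\<exists>\<sigma>'. (finite (adj S x) \<and> is_subgroup (adj S x) \<and> adj S x \<subseteq> W \<and>
            sec_on c (adj S x) \<sigma>' \<and> Inv1 c p W (adj S x) \<sigma>') \<and> (\<forall>v\<in>S. \<sigma>' v = \<sigma> v)"
proof -
  have p0: "p > 0" using pr prime_gt_0_nat by blast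
  define ht where "ht w = (LEAST j. w \<notin> nmul (p^j) ` W)" for w
  have htI: "w \<in> nmul (p^j) ` W \<longleftrightarrow> j < ht w" if "w \<in> W" "w \<noteq> 0" for w j
    unfolding ht_def using ht_iff[OF W] hW that by blast
  define X where "X = (\<lambda>v. x + v) ` S"
  have Xfin: "finite X" using S(1) by (simp add: X_def)
  have Xne: "X \<noteq> {}" using S(2) is_subgroupD(1) by (auto simp: X_def)
  have XW: "X \<subseteq> W" using S(3) x(1) W by (auto simp: X_def is_subgroupD(2))
  have X0: "w \<noteq> 0" if wX: "w \<in> X" for w
  proof
    assume "w = 0"
    then obtain v where "v \<in> S" "x + v = 0" using wX by (auto simp: X_def)
    then have "x = - v" by (simp add: add_eq_0_iff)
    then show False using x(2) S(2) \<open>v \<in> S\<close> is_subgroupD(3) by blast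
  qed
  have "Max (ht ` X) \<in> ht ` X" using Max_in[of "ht ` X"] Xfin Xne by blast
  then obtain x' where x'X: "x' \<in> X" and x'max: "ht x' = Max (ht ` X)"
    by (metis imageE)
  obtain v0 where v0: "v0 \<in> S" "x' = x + v0" using x'X by (auto simp: X_def)
  have x'W: "x' \<in> W" using x'X XW by blast
  have x'nz: "x' \<noteq> 0" using X0 x'X by blast
  have x'S: "x' \<notin> S"
  proof
    assume "x' \<in> S"
    then have "x' - v0 \<in> S" using S(2) v0(1) subgroup_diff by blast
    then show False using x(2) v0(2) by simp
  qed
  have px'S: "nmul p x' \<in> S"
    using v0 x(3) S(2) by (simp add: nmul_plus is_subgroupD(2) subgroup_nmul)
  have adjeq: "adj S x' = adj S x"
  proof
    show "adj S x' \<subseteq> adj S x"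
    proof
      fix u assume "u \<in> adj S x'"
      then obtain v i where "v \<in> S" "u = v + nmul i x'" unfolding adj_def by blast
      then have "u = (v + nmul i v0) + nmul i x" "v + nmul i v0 \<in> S"
        using v0 S(2) by (simp_all add: nmul_plus algebra_simps is_subgroupD(2) subgroup_nmul)
      then show "u \<in> adj S x" using adj_mem by metis
    qed
  next
    show "adj S x \<subseteq> adj S x'"
    proof
      fix u assume "u \<in> adj S x"
      then obtain v i where "v \<in> S" "u = v + nmul i x" unfolding adj_def by blast
      then have "u = (v - nmul i v0) + nmul i x'" "v - nmul i v0 \<in> S"
        using v0 S(2) by (simp_all add: nmul_plus algebra_simps subgroup_diff subgroup_nmul)
      then show "u \<in> adj S x'" using adj_mem by metis
    qed
  qed
  have proper: "x' \<in> nmul (p^j) ` W" if "v \<in> S" "x' + v \<in> nmul (p^j) ` W" for v j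
  proof -
    have "x' + v \<in> X" using v0 that(1) S(2) by (auto simp: X_def add.assoc is_subgroupD(2))
    then have "j < ht (x' + v)" using htI[of "x' + v" j] that(2) XW X0 by blast
    also have "ht (x' + v) \<le> ht x'" using \<open>x' + v \<in> X\<close> Xfin x'max by simp
    finally show ?thesis using htI[OF x'W x'nz] by blast
  qed
  define H where "H = ht x'"
  have H1: "H \<ge> 1"
  proof -
    have "x' \<in> nmul (p^0) ` W" using x'W by simp
    then show ?thesis using htI[OF x'W x'nz, of 0] by (simp add: H_def)
  qed
  have "x' \<in> nmul (p^(H-1)) ` W" using htI[OF x'W x'nz, of "H - 1"] H1 by (simp add: H_def)
  then obtain w where w: "w \<in> W" "x' = nmul (p^(H-1)) w" by blast
  define e1 where "e1 = em (p^(H-1)) (0, w)"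
  have e1s: "snd e1 = x'" using w by (simp add: e1_def)
  have e1P: "e1 \<in> PW c p W (H-1)" using PW_in[of "(0,w)" W p "H-1"] w by (simp add: e1_def)
  have pH: "p * p^(H-1) = p^H" using H1 by (metis Suc_diff_le diff_Suc_1 power_Suc)
  have pe1: "em p e1 = em (p^H) (0,w)" by (simp only: e1_def emul_mult[symmetric] pH)
  have px'H: "nmul p x' = nmul (p^H) w" using w by (simp only: nmul_mult[symmetric] pH)
  have sig_px': "\<sigma> (nmul p x') \<in> PW c p W H"
    using S(5) px'S px'H w(1) unfolding Inv1_def by blast
  define d where "d = em p e1 \<oplus> \<ominus> (\<sigma> (nmul p x'))"
  have dsnd: "snd d = 0" using sec_snd[OF S(4) px'S] e1s by (simp add: d_def)
  have dP: "d \<in> PW c p W H"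
    unfolding d_def using PW_add[OF _ PW_neg[OF sig_px' W] W] PW_in[of "(0,w)" W p H] w pe1 by simp
  have "(fst d, 0) \<in> PW c p W H" using dP dsnd by (metis prod.collapse)
  then obtain a where a: "fst d = nmul (p^H) a" using pure unfolding pure_on_def by blast
  have dA: "d = (nmul (p^H) a, 0)" using a dsnd by (metis prod.collapse)
  define e where "e = e1 \<oplus> \<ominus> (nmul (p^(H-1)) a, 0)"
  have es: "snd e = x'" using e1s by (simp add: e_def)
  have "em p e = em p e1 \<oplus> \<ominus> (nmul (p^H) a, 0)"
    by (simp only: e_def emul_distrib emul_eneg emul_inA nmul_mult[symmetric] pH)
  also have "\<dots> = \<sigma> (nmul p x')"
    using dA[symmetric] unfolding d_def by (simp add: eneg_eadd eadd_ac)
  finally have pe: "em p e = \<sigma> (nmul p x')" .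
  have eP: "e \<in> PW c p W (H-1)"
  proof -
    have "(nmul (p^(H-1)) a, 0) \<in> PW c p W (H-1)"
      using PW_in[of "(a,0)" W p "H-1"] is_subgroupD(1)[OF W] by simp
    then show ?thesis unfolding e_def using PW_add[OF e1P PW_neg[OF _ W] W] by blast
  qed
  obtain \<sigma>' where s': "sec_on c (adj S x') \<sigma>'" "\<forall>v\<in>S. \<sigma>' v = \<sigma> v"
    "\<forall>v\<in>S. \<forall>i. \<sigma>' (v + nmul i x') = \<sigma> v \<oplus> em i e"
    using adjoin[OF S(2) S(4) x'S px'S pr es pe] by blast
  have fin: "finite (adj S x')" using adj_finite[OF S(1) S(2) px'S p0] .
  have sg: "is_subgroup (adj S x')" using adj_subgroup[OF S(2) px'S p0] .
  have sub: "adj S x' \<subseteq> W"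
  proof
    fix u assume "u \<in> adj S x'"
    then obtain v i where "v \<in> S" "u = v + nmul i x'" unfolding adj_def by blast
    then show "u \<in> W" using S(3) x'W W by (auto simp: is_subgroupD(2) subgroup_nmul)
  qed
  have inv: "Inv1 c p W (adj S x') \<sigma>'"
    unfolding Inv1_def
  proof (intro ballI allI impI)
    fix u j assume u: "u \<in> adj S x'" and uj: "u \<in> nmul (p^j) ` W"
    then obtain v i where v: "v \<in> S" "u = v + nmul i x'" unfolding adj_def by blast
    show "\<sigma>' u \<in> PW c p W j"
    proof (cases "p dvd i")
      case True
      then obtain q where q: "i = q * p" by (metis dvd_def mult.commute)
      have "u = v + nmul q (nmul p x')" using v q by (simp add: nmul_mult)
      then have uS: "u \<in> S" using v(1) px'S S(2) by (simp add: is_subgroupD(2) subgroup_nmul)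
      then have "\<sigma>' u = \<sigma> u" using s'(2) by blast
      then show ?thesis using S(5) uS uj unfolding Inv1_def by simp
    next
      case False
      obtain i' q where iq: "i * i' = Suc (q * p^1)" using inv_mod[OF pr False] by blast
      have "nmul i' u = nmul i' v + nmul (i * i') x'"
        using v by (simp add: nmul_plus nmul_mult[symmetric] mult.commute)
      also have "\<dots> = x' + (nmul i' v + nmul q (nmul p x'))"
        using iq by (simp add: nmul_mult algebra_simps nmul_comm[of p q])
      finally have eq: "nmul i' u = x' + (nmul i' v + nmul q (nmul p x'))" .
      have "nmul i' u \<in> nmul (p^j) ` W"
        using uj subgroup_nmul[OF subgroup_image_nmul[OF W]] by blast
      moreover have "nmul i' v + nmul q (nmul p x') \<in> S"
        using v(1) px'S S(2) by (simp add: is_subgroupD(2) subgroup_nmul)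
      ultimately have x'j: "x' \<in> nmul (p^j) ` W" using proper eq by metis
      have "v = u - nmul i x'" using v by simp
      then have vj: "v \<in> nmul (p^j) ` W"
        using uj x'j subgroup_diff[OF subgroup_image_nmul[OF W]] subgroup_nmul[OF subgroup_image_nmul[OF W]]
        by metis
      have "j < H" using x'j htI[OF x'W x'nz] by (simp add: H_def)
      then have "j \<le> H - 1" by simp
      then have "e \<in> PW c p W j" using eP PW_mono[of j "H-1" W p] W by blast
      then have "em i e \<in> PW c p W j" using PW_emul W by blast
      moreover have "\<sigma> v \<in> PW c p W j" using S(5) v(1) vj unfolding Inv1_def by blast
      ultimately show ?thesis using s'(3) v PW_add W by simp
    qed
  qed
  show ?thesis using fin sg sub s' inv adjeq by metis
qed

end

lemma sec_from_local:
  assumes loc: "\<forall>F. finite F \<longrightarrow> F \<subseteq> W \<longrightarrow> (\<exists>S \<sigma>'. (P S \<sigma>' \<and> sec_on c S \<sigma>' \<and> is_subgroup S) \<and> F \<subseteq> S \<and> (\<forall>v\<in>F. \<sigma> v = \<sigma>' v))"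
    and W: "is_subgroup W"
  shows "sec_on c W \<sigma>"
  unfolding sec_on_def
proof (intro conjI ballI)
  fix v assume v: "v \<in> W"
  then have "finite {v}" "{v} \<subseteq> W" by auto
  then obtain S \<sigma>' where S: "sec_on c S \<sigma>'" "{v} \<subseteq> S" "\<forall>w\<in>{v}. \<sigma> w = \<sigma>' w"
    using loc[rule_format] by metis
  have "snd (\<sigma>' v) = v" using S(1,2) unfolding sec_on_def by blast
  then show "snd (\<sigma> v) = v" using S(3) by simp
next
  fix u v assume uv: "u \<in> W" "v \<in> W"
  then have "{u, v, u + v} \<subseteq> W" using is_subgroupD(2)[OF W] by blast
  moreover have "finite {u, v, u + v}" by simp
  ultimately obtain S \<sigma>' where S: "sec_on c S \<sigma>'" "{u, v, u + v} \<subseteq> S" "\<forall>w\<in>{u, v, u + v}. \<sigma> w = \<sigma>' w"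
    using loc[rule_format] by metis
  have "\<sigma>' (u + v) = eadd c (\<sigma>' u) (\<sigma>' v)" using S(1,2) unfolding sec_on_def by blast
  then show "\<sigma> (u + v) = eadd c (\<sigma> u) (\<sigma> v)" using S(3) by simp
qed

lemma L1:
  fixes c :: "'t::{ab_group_add,countable} \<times> 't \<Rightarrow> 'a::ab_group_add"
  assumes coc: "cocyc c" and W: "is_subgroup W" and pr: "prime p"
    and tors: "\<forall>t::'t. \<exists>k. nmul (p^k) t = 0"
    and pure: "pure_on c p W"
    and hW: "\<forall>w\<in>W. w \<noteq> 0 \<longrightarrow> (\<exists>j. w \<notin> nmul (p^j) ` W)"
    and S0: "finite S0" "is_subgroup S0" "S0 \<subseteq> W" "sec_on c S0 \<sigma>0" "Inv1 c p W S0 \<sigma>0"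
  shows "\<exists>\<sigma>. (\<forall>v\<in>S0. \<sigma> v = \<sigma>0 v) \<and> sec_on c W \<sigma>"
proof -
  interpret cocyc c by (rule coc)
  define Q where "Q S \<sigma> \<longleftrightarrow> finite S \<and> is_subgroup S \<and> S \<subseteq> W \<and> sec_on c S \<sigma> \<and> Inv1 c p W S \<sigma>" for S \<sigma>
  have "\<exists>\<sigma>. (\<forall>v\<in>S0. \<sigma> v = \<sigma>0 v) \<and>
     (\<forall>F. finite F \<longrightarrow> F \<subseteq> W \<longrightarrow> (\<exists>S \<sigma>'. Q S \<sigma>' \<and> F \<subseteq> S \<and> (\<forall>v\<in>F. \<sigma> v = \<sigma>' v)))"
  proof (rule chain_ext[where Q=Q and W=W and p=p])
    show "is_subgroup W" by (rule W)
  next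
    show "\<forall>t::'t. \<exists>k. nmul (p^k) t = 0" by (rule tors)
  next
    show "prime p" by (rule pr)
  next
    show "Q S0 \<sigma>0" using S0 by (simp add: Q_def)
  next
    fix S \<sigma> assume "Q S \<sigma>" then show "is_subgroup S \<and> S \<subseteq> W" by (simp add: Q_def)
  next
    fix S \<sigma> x assume a: "Q S \<sigma>" "x \<in> W" "x \<notin> S" "nmul p x \<in> S"
    have "finite S" "is_subgroup S" "S \<subseteq> W" "sec_on c S \<sigma>" "Inv1 c p W S \<sigma>"
      using a(1) by (simp_all add: Q_def)
    from Q1_step[OF W pr pure hW this a(2-4)]
    show "\<exists>\<sigma>'. Q (adj S x) \<sigma>' \<and> (\<forall>v\<in>S. \<sigma>' v = \<sigma> v)"
      unfolding Q_def .
  qed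
  then obtain \<sigma> where s: "\<forall>v\<in>S0. \<sigma> v = \<sigma>0 v"
    "\<forall>F. finite F \<longrightarrow> F \<subseteq> W \<longrightarrow> (\<exists>S \<sigma>'. Q S \<sigma>' \<and> F \<subseteq> S \<and> (\<forall>v\<in>F. \<sigma> v = \<sigma>' v))" by (elim exE conjE) (rule that, assumption+)
  have loc: "\<forall>F. finite F \<longrightarrow> F \<subseteq> W \<longrightarrow> (\<exists>S \<sigma>'. (True \<and> sec_on c S \<sigma>' \<and> is_subgroup S) \<and> F \<subseteq> S \<and> (\<forall>v\<in>F. \<sigma> v = \<sigma>' v))"
  proof (intro allI impI)
    fix F :: "'t set" assume F: "finite F" "F \<subseteq> W"
    obtain S \<sigma>' where "Q S \<sigma>'" "F \<subseteq> S" "\<forall>v\<in>F. \<sigma> v = \<sigma>' v" using s(2)[rule_format, OF F] by blast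
    then show "\<exists>S \<sigma>'. (True \<and> sec_on c S \<sigma>' \<and> is_subgroup S) \<and> F \<subseteq> S \<and> (\<forall>v\<in>F. \<sigma> v = \<sigma>' v)"
      unfolding Q_def by blast
  qed
  have "sec_on c W \<sigma>" by (rule sec_from_local[OF loc W])
  then show ?thesis using s(1) by blast
qed


definition inC :: "('t::ab_group_add \<times> 't \<Rightarrow> 'a::ab_group_add) \<Rightarrow> nat \<Rightarrow> nat \<Rightarrow> 't set \<Rightarrow> ('t \<Rightarrow> 'a \<times> 't) \<Rightarrow> 'a \<times> 't \<Rightarrow> bool" where
  "inC c p m S \<sigma> e \<longleftrightarrow> (\<exists>v f. v \<in> S \<and> e = eadd c (\<sigma> v) (emul c (p^m) f))"

definition inPC :: "('t::ab_group_add \<times> 't \<Rightarrow> 'a::ab_group_add) \<Rightarrow> nat \<Rightarrow> nat \<Rightarrow> 't set \<Rightarrow> ('t \<Rightarrow> 'a \<times> 't) \<Rightarrow> nat \<Rightarrow> 'a \<times> 't \<Rightarrow> bool" where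
  "inPC c p m S \<sigma> j e \<longleftrightarrow> (\<exists>g d. inC c p m S \<sigma> d \<and> e = eadd c (emul c (p^j) g) d)"

definition Inv2 :: "('t::ab_group_add \<times> 't \<Rightarrow> 'a::ab_group_add) \<Rightarrow> nat \<Rightarrow> nat \<Rightarrow> 't set \<Rightarrow> ('t \<Rightarrow> 'a \<times> 't) \<Rightarrow> bool" where
  "Inv2 c p m S \<sigma> \<longleftrightarrow> (\<forall>j a. inPC c p m S \<sigma> j (a, 0) \<longrightarrow> a \<in> range (nmul (p^j)))"

context cocyc begin

lemma inC_add:
  assumes S: "is_subgroup S" "sec_on c S \<sigma>" and d: "inC c p m S \<sigma> d" "inC c p m S \<sigma> d'"
  shows "inC c p m S \<sigma> (d \<oplus> d')"
proof -
  obtain v f v' f' where "v \<in> S" "d = \<sigma> v \<oplus> em (p^m) f" "v' \<in> S" "d' = \<sigma> v' \<oplus> em (p^m) f'"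
    using d unfolding inC_def by blast
  moreover have "\<sigma> (v + v') = \<sigma> v \<oplus> \<sigma> v'" using sec_add[OF S(2)] calculation by blast
  ultimately have "d \<oplus> d' = \<sigma> (v + v') \<oplus> em (p^m) (f \<oplus> f')" "v + v' \<in> S"
    using S(1) by (simp_all add: emul_distrib eadd_ac is_subgroupD(2))
  then show ?thesis unfolding inC_def by blast
qed

lemma inC_neg:
  assumes S: "is_subgroup S" "sec_on c S \<sigma>" and d: "inC c p m S \<sigma> d"
  shows "inC c p m S \<sigma> (\<ominus> d)"
proof -
  obtain v f where "v \<in> S" "d = \<sigma> v \<oplus> em (p^m) f"
    using d unfolding inC_def by blast
  moreover have "\<sigma> (- v) = \<ominus> (\<sigma> v)" using sec_neg[OF S(2) S(1)] calculation by blast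
  ultimately have "\<ominus> d = \<sigma> (- v) \<oplus> em (p^m) (\<ominus> f)" "- v \<in> S"
    using S(1) by (simp_all add: emul_eneg eneg_eadd is_subgroupD(3))
  then show ?thesis unfolding inC_def by blast
qed

lemma inC_sec: "v \<in> S \<Longrightarrow> inC c p m S \<sigma> (\<sigma> v)"
  unfolding inC_def by (intro exI[of _ v] exI[of _ "(0,0)"]) simp

lemma inC_pm:
  assumes "is_subgroup S" "sec_on c S \<sigma>" shows "inC c p m S \<sigma> (em (p^m) f)"
proof -
  have "\<sigma> 0 = (0,0)" "0 \<in> S" using sec_0[OF assms(2,1)] is_subgroupD(1)[OF assms(1)] by auto
  then show ?thesis unfolding inC_def by (intro exI[where x=0] exI[where x=f]) simp
qed

lemma inC_emul:
  assumes S: "is_subgroup S" "sec_on c S \<sigma>" and d: "inC c p m S \<sigma> d"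
  shows "inC c p m S \<sigma> (em n d)"
proof (induct n)
  case 0 then show ?case using inC_pm[OF S, where f="(0,0)"] by simp
next
  case (Suc n) then show ?case using inC_add[OF S d] by simp
qed

lemma inPC_add:
  assumes S: "is_subgroup S" "sec_on c S \<sigma>" and d: "inPC c p m S \<sigma> j e" "inPC c p m S \<sigma> j e'"
  shows "inPC c p m S \<sigma> j (e \<oplus> e')"
proof -
  obtain g d g' d' where "inC c p m S \<sigma> d" "e = em (p^j) g \<oplus> d" "inC c p m S \<sigma> d'" "e' = em (p^j) g' \<oplus> d'"
    using d unfolding inPC_def by blast
  moreover have "e \<oplus> e' = em (p^j) (g \<oplus> g') \<oplus> (d \<oplus> d')" using calculation by (simp add: emul_distrib eadd_ac)
  ultimately show ?thesis unfolding inPC_def using inC_add[OF S] by blast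
qed

lemma inPC_neg:
  assumes S: "is_subgroup S" "sec_on c S \<sigma>" and d: "inPC c p m S \<sigma> j e"
  shows "inPC c p m S \<sigma> j (\<ominus> e)"
proof -
  obtain g d where "inC c p m S \<sigma> d" "e = em (p^j) g \<oplus> d"
    using d unfolding inPC_def by blast
  moreover have "\<ominus> e = em (p^j) (\<ominus> g) \<oplus> (\<ominus> d)" using calculation by (simp add: emul_eneg eneg_eadd)
  ultimately show ?thesis unfolding inPC_def using inC_neg[OF S] by blast
qed

lemma inPC_C: "inC c p m S \<sigma> d \<Longrightarrow> inPC c p m S \<sigma> j d"
  unfolding inPC_def by (intro exI[of _ "(0,0)"] exI[of _ d]) simp

lemma inPC_pj:
  assumes "is_subgroup S" "sec_on c S \<sigma>" shows "inPC c p m S \<sigma> j (em (p^j) g)"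
proof -
  have "inC c p m S \<sigma> (0,0)" using inC_pm[OF assms, where f="(0,0)"] by simp
  then show ?thesis unfolding inPC_def by (intro exI[where x=g] exI[where x="(0,0)"]) simp
qed

lemma inPC_mono:
  assumes S: "is_subgroup S" "sec_on c S \<sigma>" and jk: "j \<le> k" and e: "inPC c p m S \<sigma> k e"
  shows "inPC c p m S \<sigma> j e"
proof -
  obtain g d where gd: "inC c p m S \<sigma> d" "e = em (p^k) g \<oplus> d" using e unfolding inPC_def by blast
  have "p^k = p^j * p^(k-j)" using jk by (simp add: power_add[symmetric])
  then have "em (p^k) g = em (p^j) (em (p^(k-j)) g)" by (simp add: emul_mult)
  then show ?thesis using gd unfolding inPC_def by metis
qed

lemma inPC_m_C:
  assumes S: "is_subgroup S" "sec_on c S \<sigma>" and e: "inPC c p m S \<sigma> m e"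
  shows "inC c p m S \<sigma> e"
proof -
  obtain g d where gd: "inC c p m S \<sigma> d" "e = em (p^m) g \<oplus> d" using e unfolding inPC_def by blast
  then show ?thesis using inC_add[OF S inC_pm[OF S] gd(1)] by simp
qed

lemma inPC_0: "is_subgroup S \<Longrightarrow> sec_on c S \<sigma> \<Longrightarrow> inPC c p m S \<sigma> 0 e"
  using inPC_pj[of S \<sigma> p m 0 e] by simp


lemma Q2_step:
  assumes pr: "prime p"
    and S: "is_subgroup S" "sec_on c S \<sigma>" "Inv2 c p m S \<sigma>"
    and x: "x \<notin> S" "nmul p x \<in> S"
  shows "\<exists>\<sigma>'. (is_subgroup (adj S x) \<and> sec_on c (adj S x) \<sigma>' \<and> Inv2 c p m (adj S x) \<sigma>') \<and> (\<forall>v\<in>S. \<sigma>' v = \<sigma> v)"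
proof -
  have p0: "p > 0" using pr prime_gt_0_nat by blast
  let ?PC = "inPC c p m S \<sigma>"
  define J where "J = {j. j \<le> m \<and> (\<exists>a. ?PC j (a, x))}"
  have J0: "0 \<in> J" using inPC_0[OF S(1,2)] by (simp add: J_def)
  have Jfin: "finite J" by (rule finite_subset[of J "{..m}"]) (auto simp: J_def)
  define js where "js = Max J"
  have jsJ: "js \<in> J" using Max_in[OF Jfin] J0 by (auto simp: js_def)
  have jsmax: "j \<le> js" if "j \<in> J" for j using Max_ge[OF Jfin that] by (simp add: js_def)
  obtain a0 where a0: "?PC js (a0, x)" using jsJ by (auto simp: J_def)
  have jsm: "js \<le> m" using jsJ by (simp add: J_def)
  define e1 where "e1 = (a0, x)"
  obtain g d0 where gd: "inC c p m S \<sigma> d0" "e1 = em (p^js) g \<oplus> d0"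
    using a0 unfolding inPC_def e1_def by blast
  define dd where "dd = em p e1 \<oplus> \<ominus> (\<sigma> (nmul p x))"
  have ddsnd: "snd dd = 0" using sec_snd[OF S(2) x(2)] by (simp add: dd_def e1_def)
  have "em p e1 = em (p^(Suc js)) g \<oplus> em p d0"
    using gd(2) by (simp add: emul_distrib emul_mult[symmetric])
  then have "dd = em (p^(Suc js)) g \<oplus> (em p d0 \<oplus> \<ominus> (\<sigma> (nmul p x)))"
    by (simp add: dd_def eadd_assoc)
  moreover have "inC c p m S \<sigma> (em p d0 \<oplus> \<ominus> (\<sigma> (nmul p x)))"
    using inC_add[OF S(1,2) inC_emul[OF S(1,2) gd(1)] inC_neg[OF S(1,2) inC_sec[OF x(2)]]] .
  ultimately have "?PC (Suc js) dd" unfolding inPC_def by blast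
  then have "?PC (Suc js) (fst dd, 0)" using ddsnd by (metis prod.collapse)
  then obtain a' where a': "fst dd = nmul (p^(Suc js)) a'" using S(3) unfolding Inv2_def by blast
  have ddA: "dd = (nmul (p^(Suc js)) a', 0)" using a' ddsnd by (metis prod.collapse)
  define e where "e = e1 \<oplus> \<ominus> (nmul (p^js) a', 0)"
  have es: "snd e = x" by (simp add: e_def e1_def)
  have "em p e = em p e1 \<oplus> \<ominus> (nmul (p^(Suc js)) a', 0)"
    by (simp add: e_def emul_distrib emul_eneg nmul_mult[symmetric] nmul_neg)
  also have "\<dots> = \<sigma> (nmul p x)"
    using ddA[symmetric] unfolding dd_def by (simp add: eneg_eadd eadd_ac)
  finally have pe: "em p e = \<sigma> (nmul p x)" .
  have ePC: "?PC js e"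
  proof -
    have "e = em (p^js) (g \<oplus> \<ominus> (a',0)) \<oplus> d0"
      using gd(2) by (simp add: e_def emul_distrib emul_eneg eadd_ac nmul_neg)
    then show ?thesis using gd(1) unfolding inPC_def by blast
  qed
  have star: "a1 \<in> range (nmul (p^j))" if h: "?PC j (e \<oplus> \<ominus> (a1, 0))" for j a1
  proof -
    have key: "?PC j e"
    proof (rule ccontr)
      assume nj: "\<not> ?PC j e"
      have jgt: "js < j"
      proof (rule ccontr)
        assume "\<not> js < j"
        then have "j \<le> js" by simp
        then show False using nj inPC_mono[OF S(1,2) _ ePC] by blast
      qed
      have "snd (e \<oplus> \<ominus> (a1, 0)) = x" using es by simp
      then have sx: "e \<oplus> \<ominus> (a1, 0) = (fst (e \<oplus> \<ominus> (a1, 0)), x)" by (metis prod.collapse)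
      show False
      proof (cases "j \<le> m")
        case True
        then have "j \<in> J" using h sx unfolding J_def by (metis (mono_tags, lifting) mem_Collect_eq)
        then show False using jsmax jgt by fastforce
      next
        case False
        then have "?PC m (e \<oplus> \<ominus> (a1, 0))" using inPC_mono[OF S(1,2) _ h, of m] by simp
        then have "m \<in> J" using sx unfolding J_def by (metis (mono_tags, lifting) mem_Collect_eq order_refl)
        then have "js = m" using jsmax jsm by fastforce
        then have "inC c p m S \<sigma> e" using inPC_m_C[OF S(1,2)] ePC by simp
        then show False using nj inPC_C by blast
      qed
    qed
    have eq: "e \<oplus> \<ominus> (e \<oplus> \<ominus> (a1, 0)) = (a1, 0)" by (simp add: eneg_eadd)
    have "?PC j (e \<oplus> \<ominus> (e \<oplus> \<ominus> (a1, 0)))" using inPC_add[OF S(1,2) key inPC_neg[OF S(1,2) h]] .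
    then have "?PC j (a1, 0)" unfolding eq .
    then show ?thesis using S(3) unfolding Inv2_def by blast
  qed
  obtain \<sigma>' where s': "sec_on c (adj S x) \<sigma>'" "\<forall>v\<in>S. \<sigma>' v = \<sigma> v"
    "\<forall>v\<in>S. \<forall>i. \<sigma>' (v + nmul i x) = \<sigma> v \<oplus> em i e"
    using adjoin[OF S(1,2) x pr es pe] by blast
  have sg: "is_subgroup (adj S x)" using adj_subgroup[OF S(1) x(2) p0] .
  have inv: "Inv2 c p m (adj S x) \<sigma>'"
    unfolding Inv2_def
  proof (intro allI impI)
    fix j a assume "inPC c p m (adj S x) \<sigma>' j (a, 0)"
    then obtain h d' where hd: "inC c p m (adj S x) \<sigma>' d'" "(a, 0) = em (p^j) h \<oplus> d'"
      unfolding inPC_def by blast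
    then obtain u f' where uf: "u \<in> adj S x" "d' = \<sigma>' u \<oplus> em (p^m) f'" unfolding inC_def by blast
    then obtain v i where vi: "v \<in> S" "u = v + nmul i x" unfolding adj_def by blast
    have su: "\<sigma>' u = \<sigma> v \<oplus> em i e" using s'(3) vi by simp
    show "a \<in> range (nmul (p^j))"
    proof (cases "p dvd i")
      case True
      then obtain q where q: "i = q * p" by (metis dvd_def mult.commute)
      have "u = v + nmul q (nmul p x)" using vi q by (simp add: nmul_mult)
      then have uS: "u \<in> S" using vi(1) x(2) S(1) by (simp add: is_subgroupD(2) subgroup_nmul)
      then have "\<sigma>' u = \<sigma> u" using s'(2) by blast
      then have "d' = \<sigma> u \<oplus> em (p^m) f'" using uf(2) by simp
      then have "inC c p m S \<sigma> d'" using uS unfolding inC_def by blast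
      then have "?PC j (a, 0)" using hd(2) unfolding inPC_def by blast
      then show ?thesis using S(3) unfolding Inv2_def by blast
    next
      case False
      obtain i' q where iq: "i * i' = Suc (q * p^j)" using inv_mod[OF pr False] by blast
      define X where "X = em (p^j) (em i' h \<oplus> em q e) \<oplus> (\<sigma> (nmul i' v) \<oplus> em (p^m) (em i' f'))"
      have XPC: "?PC j X"
      proof -
        have "inC c p m S \<sigma> (\<sigma> (nmul i' v) \<oplus> em (p^m) (em i' f'))"
          unfolding inC_def using vi(1) S(1) subgroup_nmul by blast
        then show ?thesis unfolding X_def inPC_def by blast
      qed
      have "em i' (a, 0) = em i' (em (p^j) h) \<oplus> (em i' (\<sigma> v) \<oplus> em i' (em i e)) \<oplus> em i' (em (p^m) f')"
        using hd(2) uf(2) su by (simp add: emul_distrib eadd_assoc)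
      also have "em i' (em i e) = e \<oplus> em (p^j) (em q e)"
      proof -
        have "em i' (em i e) = em (i * i') e" by (simp add: emul_mult[symmetric] mult.commute)
        also have "\<dots> = e \<oplus> em (q * p^j) e" using iq by simp
        also have "\<dots> = e \<oplus> em (p^j) (em q e)" by (simp add: emul_mult[symmetric] mult.commute)
        finally show ?thesis .
      qed
      also have "em i' (\<sigma> v) = \<sigma> (nmul i' v)" using sec_nmul[OF S(2) S(1) vi(1)] by simp
      also have "em i' (em (p^j) h) = em (p^j) (em i' h)" by (simp add: emul_mult[symmetric] mult.commute)
      also have "em i' (em (p^m) f') = em (p^m) (em i' f')" by (simp add: emul_mult[symmetric] mult.commute)
      finally have "em i' (a, 0) = e \<oplus> X" by (simp add: X_def emul_distrib eadd_ac)
      then have "(nmul i' a, 0) = e \<oplus> X" by simp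
      then have "e \<oplus> \<ominus> (nmul i' a, 0) = \<ominus> X"
        by (metis eadd_neg_cancel3 eadd_assoc eadd_neg_right eadd_0_right eneg_eadd eadd_comm)
      then have "?PC j (e \<oplus> \<ominus> (nmul i' a, 0))" using inPC_neg[OF S(1,2) XPC] by simp
      then have r: "nmul i' a \<in> range (nmul (p^j))" using star by blast
      have "nmul i (nmul i' a) = a + nmul (p^j) (nmul q a)"
        using iq by (simp add: nmul_mult[symmetric] mult.commute)
      then have "a = nmul i (nmul i' a) - nmul (p^j) (nmul q a)" by (simp add: algebra_simps)
      moreover have "nmul i (nmul i' a) \<in> range (nmul (p^j))"
        using r subgroup_nmul[OF subgroup_range_nmul] by blast
      ultimately show ?thesis using subgroup_diff[OF subgroup_range_nmul] by (metis rangeI)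
    qed
  qed
  show ?thesis using sg s' inv by blast
qed

end


lemma factor_p:
  assumes pr: "prime (p::nat)" and n: "n \<ge> 1"
  shows "\<exists>v q. n = p^v * q \<and> \<not> p dvd q"
  using n
proof (induct n rule: less_induct)
  case (less n)
  show ?case
  proof (cases "p dvd n")
    case False
    then show ?thesis by (intro exI[of _ 0] exI[of _ n]) simp
  next
    case True
    then obtain n' where n': "n = p * n'" by (auto simp: dvd_def)
    have p1: "p > 1" using pr prime_gt_1_nat by blast
    have "n' \<ge> 1" using less(2) n' by (cases n') auto
    moreover have "n' < n" using n' p1 \<open>n' \<ge> 1\<close> by simp
    ultimately obtain v q where "n' = p^v * q" "\<not> p dvd q" using less(1) by blast
    then show ?thesis using n' by (intro exI[of _ "Suc v"] exI[of _ q]) simp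
  qed
qed

lemma coprime_div:
  fixes t :: "'t::ab_group_add"
  assumes pr: "prime p" and q: "\<not> p dvd q" and tk: "nmul (p^k) t = 0"
  shows "t \<in> range (nmul q)"
proof -
  obtain q' r where qr: "q * q' = Suc (r * p^k)" using inv_mod[OF pr q] by blast
  have "nmul q (nmul q' t) = nmul (q * q') t" by (simp add: nmul_mult)
  also have "\<dots> = t + nmul r (nmul (p^k) t)" using qr by (simp add: nmul_mult)
  finally have "nmul q (nmul q' t) = t" using tk by simp
  then show ?thesis by (metis rangeI)
qed

lemma coprime_ann:
  fixes t :: "'t::ab_group_add"
  assumes pr: "prime p" and q: "\<not> p dvd q" and tk: "nmul (p^k) t = 0" and tq: "nmul q t = 0"
  shows "t = 0"
proof -
  obtain q' r where qr: "q * q' = Suc (r * p^k)" using inv_mod[OF pr q] by blast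
  have "nmul q' (nmul q t) = nmul (q * q') t" by (metis nmul_mult mult.commute)
  also have "\<dots> = t + nmul r (nmul (p^k) t)" using qr by (simp add: nmul_mult)
  finally show "t = 0" using tk tq by simp
qed

lemma sec_cob:
  assumes coc: "cocyc c" and s: "sec_on c UNIV \<sigma>"
  shows "c \<in> coboundaries"
proof -
  interpret cocyc c by (rule coc)
  define \<phi> where "\<phi> v = - fst (\<sigma> v)" for v
  have "\<sigma> 0 = (0,0)" using sec_0[OF s subgroup_UNIV] .
  then have "\<phi> 0 = 0" by (simp add: \<phi>_def)
  moreover have "c (x, y) = \<phi> y - \<phi> (x + y) + \<phi> x" for x y
  proof -
    have "\<sigma> (x + y) = \<sigma> x \<oplus> \<sigma> y" using sec_add[OF s] by simp
    then have "fst (\<sigma> (x + y)) = fst (\<sigma> x) + fst (\<sigma> y) + c (x, y)"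
      using sec_snd[OF s] by (simp add: eadd_def)
    then show ?thesis by (simp add: \<phi>_def algebra_simps)
  qed
  ultimately show ?thesis unfolding coboundaries_def by blast
qed

lemma pure_locsplit:
  fixes c :: "'t::ab_group_add \<times> 't \<Rightarrow> 'a::ab_group_add"
  assumes coc: "cocyc c" and ls: "locsplit c" and pr: "prime p"
    and tors: "\<forall>t::'t. \<exists>k. nmul (p^k) t = 0"
  shows "pure_on c p UNIV"
  unfolding pure_on_def
proof (intro allI impI)
  interpret cocyc c by (rule coc)
  fix a j assume "(a, 0) \<in> PW c p UNIV j"
  then obtain g where g: "(a, 0) = em (p^j) g" unfolding PW_def by blast
  define t where "t = snd g"
  have tj: "nmul (p^j) t = 0" using g by (metis snd_conv snd_emul t_def)
  obtain k0 where "nmul (p^k0) t = 0" using tors by blast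
  define N where "N = p^(Suc k0)"
  have N: "nmul N t = 0" using \<open>nmul (p^k0) t = 0\<close> by (simp add: N_def nmul_mult)
  have p1: "p > 1" using pr prime_gt_1_nat by blast
  have N1: "N > 1" unfolding N_def using p1 one_less_power[of p "Suc k0"] by blast
  have red: "nmul n t = nmul (n mod N) t" for n
  proof -
    have "n = (n div N) * N + n mod N" by simp
    then have "nmul n t = nmul ((n div N) * N) t + nmul (n mod N) t" by (metis nmul_add)
    then show ?thesis using N by (simp only: nmul_mult) simp
  qed
  define F where "F = (\<lambda>(i, k). (nmul i t, nmul k t)) ` ({..<N} \<times> {..<N})"
  have "finite F" by (simp add: F_def)
  then obtain \<phi> where \<phi>: "\<phi> 0 = 0" "\<forall>x y. (x, y) \<in> F \<longrightarrow> c (x, y) = \<phi> y - \<phi> (x + y) + \<phi> x"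
    using ls unfolding locsplit_def by blast
  have inF: "(nmul i t, nmul k t) \<in> F" for i k
  proof -
    have "(nmul (i mod N) t, nmul (k mod N) t) \<in> F" unfolding F_def using N1 by force
    then show ?thesis using red by metis
  qed
  define s where "s u = (- \<phi> u, u)" for u
  have s_mul: "em n (s t) = s (nmul n t)" for n
  proof (induct n)
    case 0 then show ?case by (simp add: s_def \<phi>(1))
  next
    case (Suc n)
    have "(t, nmul n t) \<in> F" using inF[of 1 n] by simp
    then have "c (t, nmul n t) = \<phi> (nmul n t) - \<phi> (t + nmul n t) + \<phi> t" using \<phi>(2) by blast
    then show ?case using Suc by (simp add: s_def eadd_def)
  qed
  have "g = (fst g + \<phi> t, 0) \<oplus> s t" by (simp add: s_def inA_add_T t_def)
  then have "em (p^j) g = (nmul (p^j) (fst g + \<phi> t), 0) \<oplus> s (nmul (p^j) t)"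
    by (metis emul_distrib emul_inA s_mul)
  also have "\<dots> = (nmul (p^j) (fst g + \<phi> t), 0)" using tj by (simp add: s_def \<phi>(1))
  finally show "a \<in> range (nmul (p^j))" using g by auto
qed


lemma L2:
  fixes c :: "'t::{ab_group_add,countable} \<times> 't \<Rightarrow> 'a::ab_group_add"
  assumes coc: "cocyc c" and pr: "prime p"
    and tors: "\<forall>t::'t. \<exists>k. nmul (p^k) t = 0"
    and pure: "pure_on c p UNIV"
    and pA: "\<forall>a::'a. nmul (p^m) a = 0"
  shows "\<exists>\<sigma>. sec_on c UNIV \<sigma>"
proof -
  interpret cocyc c by (rule coc)
  define Q where "Q S \<sigma> \<longleftrightarrow> is_subgroup S \<and> S \<subseteq> UNIV \<and> sec_on c S \<sigma> \<and> Inv2 c p m S \<sigma>" for S \<sigma>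
  have sg0: "is_subgroup {0::'t}" by (simp add: is_subgroup_def)
  have sec0: "sec_on c {0} (\<lambda>_. (0,0))" by (simp add: sec_on_def)
  have inv0: "Inv2 c p m {0} (\<lambda>_. (0,0))"
    unfolding Inv2_def
  proof (intro allI impI)
    fix j a assume "inPC c p m {0} (\<lambda>_. (0,0)) j (a, 0)"
    then obtain g d where gd: "inC c p m {0} (\<lambda>_. (0,0)) d" "(a, 0) = em (p^j) g \<oplus> d"
      unfolding inPC_def by blast
    then obtain v f where "v \<in> {0::'t}" "d = (\<lambda>_. (0::'a,0::'t)) v \<oplus> em (p^m) f"
      unfolding inC_def by blast
    then have "d = em (p^m) f" by simp
    then have gf: "(a, 0) = em (p^j) g \<oplus> em (p^m) f" using gd(2) by simp
    show "a \<in> range (nmul (p^j))"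
    proof (cases "j \<le> m")
      case True
      have "p^m = p^j * p^(m-j)" using True by (simp add: power_add[symmetric])
      then have "(a, 0) = em (p^j) (g \<oplus> em (p^(m-j)) f)" using gf by (simp add: emul_mult emul_distrib)
      then have "(a, 0) \<in> PW c p UNIV j" unfolding PW_def by blast
      then show ?thesis using pure unfolding pure_on_def by blast
    next
      case False
      have "p^j = p^m * p^(j-m)" using False by (simp add: power_add[symmetric])
      then have "(a, 0) = em (p^m) (em (p^(j-m)) g \<oplus> f)" using gf by (simp add: emul_mult emul_distrib)
      then have "(a, 0) \<in> PW c p UNIV m" unfolding PW_def by blast
      then have "a \<in> range (nmul (p^m))" using pure unfolding pure_on_def by blast
      then have "a = 0" using pA by auto
      then show ?thesis by (metis nmul_0 rangeI)
    qed
  qed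
  have "\<exists>\<sigma>. (\<forall>v\<in>{0}. \<sigma> v = (\<lambda>_. (0::'a,0::'t)) v) \<and>
     (\<forall>F. finite F \<longrightarrow> F \<subseteq> UNIV \<longrightarrow> (\<exists>S \<sigma>'. Q S \<sigma>' \<and> F \<subseteq> S \<and> (\<forall>v\<in>F. \<sigma> v = \<sigma>' v)))"
  proof (rule chain_ext[where Q=Q and W=UNIV and p=p])
    show "is_subgroup (UNIV::'t set)" by (rule subgroup_UNIV)
  next
    show "\<forall>t::'t. \<exists>k. nmul (p^k) t = 0" by (rule tors)
  next
    show "prime p" by (rule pr)
  next
    show "Q {0} (\<lambda>_. (0,0))" using sg0 sec0 inv0 by (simp add: Q_def)
  next
    fix S \<sigma> assume "Q S \<sigma>" then show "is_subgroup S \<and> S \<subseteq> UNIV" by (simp add: Q_def)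
  next
    fix S \<sigma> x assume a: "Q S \<sigma>" "x \<in> (UNIV::'t set)" "x \<notin> S" "nmul p x \<in> S"
    have "is_subgroup S" "sec_on c S \<sigma>" "Inv2 c p m S \<sigma>"
      using a(1) by (simp_all add: Q_def)
    from Q2_step[OF pr this a(3-4)]
    show "\<exists>\<sigma>'. Q (adj S x) \<sigma>' \<and> (\<forall>v\<in>S. \<sigma>' v = \<sigma> v)"
      unfolding Q_def by simp
  qed
  then obtain \<sigma> where s:
    "\<forall>F. finite F \<longrightarrow> F \<subseteq> UNIV \<longrightarrow> (\<exists>S \<sigma>'. Q S \<sigma>' \<and> F \<subseteq> S \<and> (\<forall>v\<in>F. \<sigma> v = \<sigma>' v))"
    by (elim exE conjE) (rule that, assumption+)
  have loc: "\<forall>F. finite F \<longrightarrow> F \<subseteq> UNIV \<longrightarrow> (\<exists>S \<sigma>'. (True \<and> sec_on c S \<sigma>' \<and> is_subgroup S) \<and> F \<subseteq> S \<and> (\<forall>v\<in>F. \<sigma> v = \<sigma>' v))"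
  proof (intro allI impI)
    fix F :: "'t set" assume F: "finite F" "F \<subseteq> UNIV"
    obtain S \<sigma>' where "Q S \<sigma>'" "F \<subseteq> S" "\<forall>v\<in>F. \<sigma> v = \<sigma>' v" using s[rule_format, OF F] by blast
    then show "\<exists>S \<sigma>'. (True \<and> sec_on c S \<sigma>' \<and> is_subgroup S) \<and> F \<subseteq> S \<and> (\<forall>v\<in>F. \<sigma> v = \<sigma>' v)"
      unfolding Q_def by blast
  qed
  have "sec_on c UNIV \<sigma>" by (rule sec_from_local[OF loc subgroup_UNIV])
  then show ?thesis by blast
qed

lemma ulm_height:
  fixes w :: "'t::ab_group_add"
  assumes pr: "prime p" and tors: "\<forall>t::'t. \<exists>k. nmul (p^k) t = 0"
    and ulm: "(ulm1 :: 't set) = {0}" and w: "w \<noteq> 0"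
  shows "\<exists>j. w \<notin> range (nmul (p^j))"
proof (rule ccontr)
  assume "\<not> ?thesis"
  then have all: "\<forall>j. w \<in> range (nmul (p^j))" by blast
  have "w \<in> range (nmul n)" if n: "n \<ge> 1" for n
  proof -
    obtain v q where vq: "n = p^v * q" "\<not> p dvd q" using factor_p[OF pr n] by blast
    obtain w' where w': "w = nmul (p^v) w'" using all by blast
    obtain k where "nmul (p^k) w' = 0" using tors by blast
    then obtain w'' where "w' = nmul q w''" using coprime_div[OF pr vq(2)] by blast
    then have "w = nmul n w''" using w' vq(1) by (simp add: nmul_mult)
    then show ?thesis by blast
  qed
  then have "w \<in> ulm1" unfolding ulm1_def by blast
  then show False using ulm w by blast
qed

lemma partI:
  fixes c :: "'t::{ab_group_add,countable} \<times> 't \<Rightarrow> 'a::ab_group_add"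
  assumes pr: "prime p" and tors: "\<forall>t::'t. \<exists>k. nmul (p^k) t = 0"
    and ulm: "(ulm1 :: 't set) = {0}" and cz: "c \<in> cocycles" and ls: "locsplit c"
  shows "c \<in> coboundaries"
proof -
  have coc: "cocyc c" using cz by (rule cocycles_cocyc)
  interpret cocyc c by (rule coc)
  have pure: "pure_on c p UNIV" using pure_locsplit[OF coc ls pr tors] .
  have hW: "\<forall>w\<in>(UNIV::'t set). w \<noteq> 0 \<longrightarrow> (\<exists>j. w \<notin> nmul (p^j) ` UNIV)"
  proof (intro ballI impI)
    fix w :: 't assume "w \<noteq> 0"
    then show "\<exists>j. w \<notin> nmul (p^j) ` UNIV" using ulm_height[OF pr tors ulm] by simp
  qed
  have sg0: "is_subgroup {0::'t}" by (simp add: is_subgroup_def)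
  have sec0: "sec_on c {0} (\<lambda>_. (0,0))" by (simp add: sec_on_def)
  have inv0: "Inv1 c p UNIV {0} (\<lambda>_. (0,0))"
    unfolding Inv1_def using PW_zero[OF subgroup_UNIV] by simp
  have fin0: "finite {0::'t}" by simp
  have sub0: "{0::'t} \<subseteq> UNIV" by simp
  obtain \<sigma> where "sec_on c UNIV \<sigma>"
    using L1[OF coc subgroup_UNIV pr tors pure hW fin0 sg0 sub0 sec0 inv0] by blast
  then show ?thesis using sec_cob[OF coc] by blast
qed

lemma partII:
  fixes c :: "'t::{ab_group_add,countable} \<times> 't \<Rightarrow> 'a::ab_group_add"
  assumes pr: "prime p" and tors: "\<forall>t::'t. \<exists>k. nmul (p^k) t = 0"
    and torsA: "\<forall>a::'a. \<exists>k. nmul (p^k) a = 0"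
    and bd: "bounded_grp TYPE('a)" and cz: "c \<in> cocycles" and ls: "locsplit c"
  shows "c \<in> coboundaries"
proof -
  have coc: "cocyc c" using cz by (rule cocycles_cocyc)
  have pure: "pure_on c p UNIV" using pure_locsplit[OF coc ls pr tors] .
  obtain n where n: "n \<ge> 1" "\<forall>a::'a. nmul n a = 0" using bd unfolding bounded_grp_def by blast
  obtain v q where vq: "n = p^v * q" "\<not> p dvd q" using factor_p[OF pr n(1)] by blast
  have pA: "\<forall>a::'a. nmul (p^v) a = 0"
  proof
    fix a :: 'a
    obtain k where "nmul (p^k) a = 0" using torsA by blast
    then have "nmul (p^k) (nmul (p^v) a) = 0" using nmul_comm[of "p^k" "p^v" a] by simp
    moreover have "nmul q (nmul (p^v) a) = 0"
    proof -
      have "q * p^v = n" using vq(1) by simp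
      then have "nmul q (nmul (p^v) a) = nmul n a" by (simp only: nmul_mult[symmetric])
      then show ?thesis using n(2) by simp
    qed
    ultimately show "nmul (p^v) a = 0" using coprime_ann[OF pr vq(2)] by blast
  qed
  obtain \<sigma> where "sec_on c UNIV \<sigma>" using L2[OF coc pr tors pure pA] by blast
  then show ?thesis using sec_cob[OF coc] by blast
qed


lemma ulm1_nmul: "t \<in> ulm1 \<Longrightarrow> nmul k t \<in> ulm1"
  unfolding ulm1_def
proof (simp, intro allI impI)
  fix n :: nat assume "\<forall>n\<ge>Suc 0. t \<in> range (nmul n)" "Suc 0 \<le> n"
  then obtain s where "t = nmul n s" by blast
  then have "nmul k t = nmul n (nmul k s)" by (simp add: nmul_comm)
  then show "nmul k t \<in> range (nmul n)" by blast
qed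

lemma exists_y:
  fixes T :: "'t::ab_group_add itself"
  assumes pr: "prime p" and tors: "\<forall>t::'t. \<exists>k. nmul (p^k) t = 0"
    and ulm: "(ulm1 :: 't set) \<noteq> {0}"
  shows "\<exists>y::'t. y \<in> ulm1 \<and> y \<noteq> 0 \<and> nmul p y = 0"
proof -
  have "(0::'t) \<in> ulm1" unfolding ulm1_def by (auto intro!: image_eqI[of _ _ 0])
  then obtain t :: 't where t: "t \<in> ulm1" "t \<noteq> 0" using ulm by blast
  obtain k where k: "nmul (p^k) t = 0" using tors by blast
  define K where "K = (LEAST k. nmul (p^k) t = 0)"
  have K: "nmul (p^K) t = 0" unfolding K_def using LeastI[of "\<lambda>k. nmul (p^k) t = 0", OF k] .
  have K0: "K \<noteq> 0" using K t(2) by (cases K) auto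
  have "nmul (p^(K-1)) t \<noteq> 0"
  proof
    assume "nmul (p^(K-1)) t = 0"
    then have "K \<le> K - 1" unfolding K_def by (rule Least_le)
    then show False using K0 by simp
  qed
  moreover have "nmul p (nmul (p^(K-1)) t) = 0"
  proof -
    have "p * p^(K-1) = p^K" using K0 by (cases K) auto
    then show ?thesis using K by (metis nmul_mult)
  qed
  moreover have "nmul (p^(K-1)) t \<in> ulm1" using ulm1_nmul t(1) by blast
  ultimately show ?thesis by blast
qed

lemma ulm1_div: "y \<in> ulm1 \<Longrightarrow> p > 0 \<Longrightarrow> \<exists>z. nmul (p^k) z = y" for p :: nat
proof -
  assume "y \<in> ulm1" "p > 0"
  then have "p^k \<ge> 1" by (simp add: Suc_le_eq)
  then show ?thesis using \<open>y \<in> ulm1\<close> unfolding ulm1_def by (metis (mono_tags, lifting) INT_E mem_Collect_eq rangeE)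
qed

lemma exists_eps:
  fixes A :: "'a::ab_group_add itself"
  assumes pr: "prime p" and torsA: "\<forall>a::'a. \<exists>k. nmul (p^k) a = 0"
    and red: "reduced TYPE('a)" and unb: "\<not> bounded_grp TYPE('a)"
  shows "\<exists>\<epsilon>::'a. nmul p \<epsilon> = 0 \<and> \<epsilon> \<in> range (nmul (p^K)) \<and> (\<exists>M. \<epsilon> \<notin> range (nmul (p^M)))"
proof (rule ccontr)
  assume "\<not> ?thesis"
  then have H: "\<And>\<epsilon>::'a. nmul p \<epsilon> = 0 \<Longrightarrow> \<epsilon> \<in> range (nmul (p^K)) \<Longrightarrow> \<epsilon> \<in> range (nmul (p^M))" for M
    by blast
  define D where "D = range (nmul (p^K) :: 'a \<Rightarrow> 'a)"
  have Dsg: "is_subgroup D" unfolding D_def by (rule subgroup_range_nmul)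
  have pDsg: "is_subgroup (nmul p ` D)" by (rule subgroup_image_nmul[OF Dsg])
  have step: "\<forall>x\<in>D. nmul (p^r) x = 0 \<longrightarrow> x \<in> nmul p ` D" for r
  proof (induct r)
    case 0
    show ?case
    proof (intro ballI impI)
      fix x assume "x \<in> D" "nmul (p^0) x = 0"
      then have "x = nmul p 0" by simp
      then show "x \<in> nmul p ` D" using is_subgroupD(1)[OF Dsg] by blast
    qed
  next
    case (Suc r)
    show ?case
    proof (intro ballI impI)
      fix x assume x: "x \<in> D" "nmul (p^(Suc r)) x = 0"
      define \<epsilon> where "\<epsilon> = nmul (p^r) x"
      have e1: "nmul p \<epsilon> = 0" using x(2) by (simp add: \<epsilon>_def nmul_mult[symmetric])
      have e2: "\<epsilon> \<in> range (nmul (p^K))" using x(1) subgroup_nmul[OF Dsg] by (simp add: \<epsilon>_def D_def)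
      obtain w where w: "\<epsilon> = nmul (p^(K + r + 1)) w" using H[OF e1 e2, of "K + r + 1"] by blast
      define x' where "x' = x - nmul (p^(K+1)) w"
      have pKw: "nmul (p^(K+1)) w = nmul p (nmul (p^K) w)"
        by (simp add: nmul_mult[symmetric] mult.commute)
      have x'D: "x' \<in> D" using x(1) Dsg unfolding x'_def
        by (metis D_def pKw nmul_comm rangeI subgroup_diff)
      have "nmul (p^r) x' = \<epsilon> - nmul (p^r * p^(K+1)) w"
        by (simp add: x'_def nmul_diff \<epsilon>_def nmul_mult)
      also have "p^r * p^(K+1) = p^(K + r + 1)" by (simp add: power_add[symmetric] add.commute add.left_commute)
      finally have "nmul (p^r) x' = 0" using w by simp
      then have "x' \<in> nmul p ` D" using Suc x'D by blast
      moreover have "nmul (p^(K+1)) w \<in> nmul p ` D" using pKw by (simp add: D_def)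
      moreover have "x = x' + nmul (p^(K+1)) w" by (simp add: x'_def)
      ultimately show "x \<in> nmul p ` D" using is_subgroupD(2)[OF pDsg] by metis
    qed
  qed
  have DpD: "D \<subseteq> nmul p ` D"
  proof
    fix x assume "x \<in> D"
    obtain r where "nmul (p^r) x = 0" using torsA by blast
    then show "x \<in> nmul p ` D" using step \<open>x \<in> D\<close> by blast
  qed
  have Dpv: "D \<subseteq> nmul (p^v) ` D" for v
  proof (induct v)
    case 0 show ?case by simp
  next
    case (Suc v)
    show ?case
    proof
      fix x assume "x \<in> D"
      then obtain x1 where x1: "x1 \<in> D" "x = nmul p x1" using DpD by blast
      then obtain x2 where x2: "x2 \<in> D" "x1 = nmul (p^v) x2" using Suc by blast
      have "x = nmul (p^(Suc v)) x2" using x1(2) x2(2) by (simp add: nmul_mult)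
      then show "x \<in> nmul (p^(Suc v)) ` D" using x2(1) by blast
    qed
  qed
  have "divisible_set D"
    unfolding divisible_set_def
  proof (intro ballI allI impI)
    fix d n assume d: "d \<in> D" and n: "(n::nat) \<ge> 1"
    obtain v q where vq: "n = p^v * q" "\<not> p dvd q" using factor_p[OF pr n] by blast
    obtain d' where d': "d' \<in> D" "d = nmul (p^v) d'" using Dpv[of v] d by blast
    obtain k where "nmul (p^k) d' = 0" using torsA by blast
    obtain q' r where qr: "q * q' = Suc (r * p^k)" using inv_mod[OF pr vq(2)] by blast
    have "nmul q (nmul q' d') = nmul (q * q') d'" by (simp add: nmul_mult)
    also have "\<dots> = d' + nmul r (nmul (p^k) d')" using qr by (simp add: nmul_mult)
    finally have qd: "nmul q (nmul q' d') = d'" using \<open>nmul (p^k) d' = 0\<close> by simp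
    have "nmul n (nmul q' d') = d" using qd d'(2) vq(1) by (simp add: nmul_mult)
    moreover have "nmul q' d' \<in> D" using d'(1) Dsg subgroup_nmul by blast
    ultimately show "\<exists>e\<in>D. nmul n e = d" by blast
  qed
  then have "D = {0}" using red Dsg unfolding reduced_def by blast
  then have "\<forall>a::'a. nmul (p^K) a = 0" unfolding D_def by auto
  moreover have "p^K \<ge> 1" using pr prime_gt_0_nat by (simp add: Suc_le_eq)
  ultimately have "bounded_grp TYPE('a)" unfolding bounded_grp_def by blast
  then show False using unb by blast
qed


definition Wp :: "nat \<Rightarrow> nat \<Rightarrow> 't::ab_group_add set" where
  "Wp p k = {t. nmul (p^(Suc k)) t = 0}"

lemma Wp_subgroup: "is_subgroup (Wp p k)"
  unfolding is_subgroup_def Wp_def by (simp add: nmul_plus nmul_neg)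

lemma Wp_mono: "k \<le> k' \<Longrightarrow> Wp p k \<subseteq> Wp p k'"
proof
  fix t assume "k \<le> k'" "t \<in> Wp p k"
  then have eq: "p^(Suc k') = p^(k' - k) * p^(Suc k)" by (simp add: power_add[symmetric])
  have "nmul (p^(Suc k')) t = nmul (p^(k' - k)) (nmul (p^(Suc k)) t)" by (simp only: eq nmul_mult)
  then show "t \<in> Wp p k'" using \<open>t \<in> Wp p k\<close> unfolding Wp_def by simp
qed

lemma Wp_py: "nmul p y = 0 \<Longrightarrow> y \<in> Wp p k"
  unfolding Wp_def by (simp only: power_Suc2 nmul_mult mem_Collect_eq) simp

lemma emul_zero_coc: "emul (\<lambda>_. 0) n e = (nmul n (fst e), nmul n (snd e))"
  by (induct n) (simp_all add: eadd_def)

lemma hom_exists: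
  fixes y :: "'t::{ab_group_add,countable}" and b :: "'a::ab_group_add"
  assumes pr: "prime p" and tors: "\<forall>t::'t. \<exists>k. nmul (p^k) t = 0"
    and y: "y \<noteq> 0" "nmul p y = 0" and b: "nmul p b = 0" "b \<in> range (nmul (p^(Suc k)))"
  shows "\<exists>\<psi>. (\<forall>u\<in>Wp p k. \<forall>v\<in>Wp p k. \<psi> (u + v) = \<psi> u + \<psi> v) \<and> \<psi> y = b"
proof -
  let ?c = "(\<lambda>_. 0) :: 't \<times> 't \<Rightarrow> 'a"
  let ?W = "Wp p k :: 't set"
  have coc: "cocyc ?c" by (rule zero_cocyc)
  interpret cocyc ?c by (rule coc)
  have p0: "p > 0" using pr prime_gt_0_nat by blast
  have Wsg: "is_subgroup ?W" by (rule Wp_subgroup)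
  have yW: "y \<in> ?W" using Wp_py[OF y(2)] .
  have pure: "pure_on ?c p ?W"
    unfolding pure_on_def PW_def by (auto simp: emul_zero_coc)
  have hW: "\<forall>w\<in>?W. w \<noteq> 0 \<longrightarrow> (\<exists>j. w \<notin> nmul (p^j) ` ?W)"
  proof (intro ballI impI)
    fix w assume "w \<in> ?W" "w \<noteq> 0"
    have "nmul (p^(Suc k)) ` ?W \<subseteq> {0}" unfolding Wp_def by auto
    then show "\<exists>j. w \<notin> nmul (p^j) ` ?W" using \<open>w \<noteq> 0\<close> by blast
  qed
  have sg0: "is_subgroup {0::'t}" by (simp add: is_subgroup_def)
  have sec0: "sec_on ?c {0} (\<lambda>_. (0,0))" by (simp add: sec_on_def)
  have y0: "y \<notin> {0}" using y(1) by simp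
  have py0: "nmul p y \<in> {0}" using y(2) by simp
  have eb: "emul ?c p (b, y) = (\<lambda>_. (0::'a, 0::'t)) (nmul p y)" using b(1) y(2) by (simp add: emul_zero_coc)
  obtain \<sigma>0 where s0: "sec_on ?c (adj {0} y) \<sigma>0"
    "\<forall>v\<in>{0}. \<forall>i. \<sigma>0 (v + nmul i y) = eadd ?c ((\<lambda>_. (0,0)) v) (emul ?c i (b, y))"
    using adjoin[OF sg0 sec0 y0 py0 pr _ eb] by auto
  have s0v: "\<sigma>0 (nmul i y) = (nmul i b, nmul i y)" for i
    using s0(2) by (simp add: emul_zero_coc eadd_def)
  have S0fin: "finite (adj {0} y)" using adj_finite[OF _ sg0 py0 p0] by simp
  have S0sg: "is_subgroup (adj {0} y)" using adj_subgroup[OF sg0 py0 p0] .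
  have S0W: "adj {0} y \<subseteq> ?W"
  proof
    fix u assume "u \<in> adj {0} y"
    then obtain i where "u = nmul i y" unfolding adj_def by auto
    then show "u \<in> ?W" using yW Wsg subgroup_nmul by blast
  qed
  obtain b'' where b'': "b = nmul (p^(Suc k)) b''" using b(2) by blast
  have inv0: "Inv1 ?c p ?W (adj {0} y) \<sigma>0"
    unfolding Inv1_def
  proof (intro ballI allI impI)
    fix u j assume u: "u \<in> adj {0} y" and uj: "u \<in> nmul (p^j) ` ?W"
    then obtain i where ui: "u = nmul i y" unfolding adj_def by auto
    obtain w where w: "w \<in> ?W" "u = nmul (p^j) w" using uj by blast
    show "\<sigma>0 u \<in> PW ?c p ?W j"
    proof (cases "j \<le> Suc k")
      case True
      have "p^(Suc k) = p^j * p^(Suc k - j)" using True by (simp add: power_add[symmetric])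
      then have "nmul i b = nmul (p^j) (nmul i (nmul (p^(Suc k - j)) b''))"
        using b'' by (simp add: nmul_mult nmul_comm[of i])
      then have "\<sigma>0 u = emul ?c (p^j) (nmul i (nmul (p^(Suc k - j)) b''), w)"
        using s0v ui w(2) by (simp add: emul_zero_coc)
      then show ?thesis unfolding PW_def using w(1) by force
    next
      case False
      have "j = (j - Suc k) + Suc k" using False by simp
      then have eq: "p^j = p^(j - Suc k) * p^(Suc k)" by (metis power_add)
      have "nmul (p^j) w = nmul (p^(j - Suc k)) (nmul (p^(Suc k)) w)" by (simp only: eq nmul_mult)
      then have "u = 0" using w unfolding Wp_def by simp
      then have iy: "nmul i y = 0" using ui by simp
      have "p dvd i"
      proof (rule ccontr)
        assume "\<not> p dvd i"
        then have "y = 0" using coprime_ann[OF pr _ _ iy, of 1] y(2) by simp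
        then show False using y(1) by simp
      qed
      then obtain q where "i = q * p" by (metis dvd_def mult.commute)
      then have "nmul i b = 0" using b(1) by (simp add: nmul_mult)
      then have "\<sigma>0 u = (0,0)" using s0v[of i] ui iy by simp
      then show ?thesis using PW_zero[OF Wsg] by simp
    qed
  qed
  obtain \<sigma> where \<sigma>: "\<forall>v\<in>adj {0} y. \<sigma> v = \<sigma>0 v" "sec_on ?c ?W \<sigma>"
    using L1[OF coc Wsg pr tors pure hW S0fin S0sg S0W s0(1) inv0] by blast
  define \<psi> where "\<psi> v = fst (\<sigma> v)" for v
  have "\<forall>u\<in>?W. \<forall>v\<in>?W. \<psi> (u + v) = \<psi> u + \<psi> v"
    using \<sigma>(2) unfolding sec_on_def \<psi>_def by (simp add: eadd_def)
  moreover have "\<psi> y = b"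
  proof -
    have "y \<in> adj {0} y" using adj_x[OF sg0] .
    then have "\<sigma> y = \<sigma>0 (nmul 1 y)" using \<sigma>(1) by simp
    then show ?thesis using s0v[of 1] by (simp add: \<psi>_def)
  qed
  ultimately show ?thesis by blast
qed


lemma range_mono: "j \<le> k \<Longrightarrow> range (nmul ((p::nat)^k)) \<subseteq> range (nmul (p^j))"
  using image_nmul_mono[OF subgroup_UNIV, of j k p] by simp

lemma nonconv_seq:
  fixes A :: "'a::{ab_group_add,countable} itself"
  assumes pr: "prime p" and torsA: "\<forall>a::'a. \<exists>k. nmul (p^k) a = 0"
    and red: "reduced TYPE('a)" and unb: "\<not> bounded_grp TYPE('a)"
  shows "\<exists>d :: nat \<Rightarrow> 'a. (\<forall>k. nmul p (d k) = 0 \<and> d k \<in> range (nmul (p^(Suc k)))) \<and>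
          (\<forall>\<alpha>. \<exists>k. \<alpha> - (\<Sum>i<k. d i) \<notin> range (nmul (p^k)))"
proof -
  define \<epsilon> where "\<epsilon> K = (SOME \<epsilon>::'a. nmul p \<epsilon> = 0 \<and> \<epsilon> \<in> range (nmul (p^K)) \<and> (\<exists>M. \<epsilon> \<notin> range (nmul (p^M))))" for K
  have \<epsilon>P: "nmul p (\<epsilon> K) = 0 \<and> \<epsilon> K \<in> range (nmul (p^K)) \<and> (\<exists>M. \<epsilon> K \<notin> range (nmul (p^M)))" for K
    unfolding \<epsilon>_def by (rule someI_ex) (rule exists_eps[OF pr torsA red unb])
  define M where "M K = (SOME M. \<epsilon> K \<notin> range (nmul (p^M)))" for K
  have MP: "\<epsilon> K \<notin> range (nmul (p^(M K)))" for K
    unfolding M_def by (rule someI_ex) (use \<epsilon>P[of K] in blast)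
  define N where "N = rec_nat 1 (\<lambda>k Nk. max (Suc Nk) (M Nk))"
  have NS: "N (Suc k) = max (Suc (N k)) (M (N k))" for k by (simp add: N_def)
  have N0: "N 0 = 1" by (simp add: N_def)
  have Nge: "N k \<ge> Suc k" for k
    by (induct k) (simp_all add: N0 NS)
  have Nmono: "N k \<le> N k'" if "k \<le> k'" for k k'
  proof -
    have "N k \<le> N (k + r)" for r by (induct r) (simp_all add: NS le_max_iff_disj)
    then have "N k \<le> N (k + (k' - k))" .
    then show ?thesis using that by simp
  qed
  have NM: "M (N k) \<le> N (Suc k)" for k by (simp add: NS)
  define dd where "dd k ak = (if (from_nat k :: 'a) - ak \<in> range (nmul (p^(M (N k)))) then \<epsilon> (N k) else 0)" for k ak
  define a where "a = rec_nat 0 (\<lambda>k ak. ak + dd k ak)"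
  have a0: "a 0 = 0" by (simp add: a_def)
  have aS: "a (Suc k) = a k + dd k (a k)" for k by (simp add: a_def)
  define d where "d k = dd k (a k)" for k
  have a_sum: "a k = (\<Sum>i<k. d i)" for k
    by (induct k) (simp_all add: a0 aS d_def)
  have dN: "d k \<in> range (nmul (p^(N k)))" for k
    using \<epsilon>P[of "N k"] by (auto simp: d_def dd_def intro: image_eqI[of _ _ 0])
  have dp: "nmul p (d k) = 0" for k
    using \<epsilon>P[of "N k"] by (simp add: d_def dd_def)
  have tail: "a (k + r) - a k \<in> range (nmul (p^(N k)))" for k r
  proof (induct r)
    case 0 then show ?case by (auto intro: image_eqI[of _ _ 0])
  next
    case (Suc r)
    have "d (k + r) \<in> range (nmul (p^(N k)))"
      using dN[of "k + r"] range_mono[OF Nmono[of k "k + r"]] by auto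
    moreover have "a (k + Suc r) - a k = (a (k + r) - a k) + d (k + r)" by (simp add: aS d_def)
    moreover have "(a (k + r) - a k) + d (k + r) \<in> range (nmul (p^(N k)))"
      by (rule is_subgroupD(2)[OF subgroup_range_nmul Suc calculation(1)])
    ultimately show ?case by (simp add: algebra_simps)
  qed
  have nonconv: "\<exists>k. \<alpha> - a k \<notin> range (nmul (p^k))" for \<alpha>
  proof (rule ccontr)
    assume "\<not> ?thesis"
    then have all: "\<forall>k. \<alpha> - a k \<in> range (nmul (p^k))" by blast
    define k0 where "k0 = to_nat \<alpha>"
    have fk: "from_nat k0 = \<alpha>" by (simp add: k0_def)
    define Mk where "Mk = M (N k0)"
    have c1: "\<alpha> - a (Suc k0) \<notin> range (nmul (p^Mk))"
    proof (cases "\<alpha> - a k0 \<in> range (nmul (p^Mk))")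
      case True
      then have aS': "a (Suc k0) = a k0 + \<epsilon> (N k0)" using fk by (simp add: aS dd_def Mk_def)
      show ?thesis
      proof
        assume "\<alpha> - a (Suc k0) \<in> range (nmul (p^Mk))"
        then have "(\<alpha> - a k0) - (\<alpha> - a (Suc k0)) \<in> range (nmul (p^Mk))"
          using True subgroup_diff[OF subgroup_range_nmul] by blast
        then have "\<epsilon> (N k0) \<in> range (nmul (p^Mk))" using aS' by (simp add: algebra_simps)
        then show False using MP by (simp add: Mk_def)
      qed
    next
      case False
      then have "a (Suc k0) = a k0" using fk by (simp add: aS dd_def Mk_def)
      then show ?thesis using False by simp
    qed
    define J where "J = Suc k0 + Mk"
    have "\<alpha> - a J \<in> range (nmul (p^J))" using all by blast
    moreover have "Mk \<le> J" by (simp add: J_def)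
    ultimately have "\<alpha> - a J \<in> range (nmul (p^Mk))" using range_mono[of Mk J p] by blast
    moreover have "a J - a (Suc k0) \<in> range (nmul (p^Mk))"
    proof -
      have "Mk \<le> N (Suc k0)" using NM by (simp add: Mk_def)
      moreover have "a J - a (Suc k0) \<in> range (nmul (p^(N (Suc k0))))" using tail[of "Suc k0" Mk] by (simp add: J_def)
      ultimately show ?thesis using range_mono[of Mk "N (Suc k0)" p] by blast
    qed
    moreover have "\<alpha> - a (Suc k0) = (\<alpha> - a J) + (a J - a (Suc k0))" by simp
    ultimately have "(\<alpha> - a J) + (a J - a (Suc k0)) \<in> range (nmul (p^Mk))"
      using is_subgroupD(2)[OF subgroup_range_nmul] by blast
    then have "\<alpha> - a (Suc k0) \<in> range (nmul (p^Mk))" by simp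
    then show False using c1 by blast
  qed
  have "d k \<in> range (nmul (p^(Suc k)))" for k using dN[of k] range_mono[OF Nge[of k]] by auto
  moreover have "\<forall>\<alpha>. \<exists>k. \<alpha> - (\<Sum>i<k. d i) \<notin> range (nmul (p^k))"
    using nonconv by (simp add: a_sum)
  ultimately show ?thesis using dp by blast
qed


lemma Wp_level:
  fixes x :: "'t::ab_group_add"
  assumes "nmul (p^K) x = 0" shows "x \<in> Wp p K"
proof -
  have "nmul (p^(Suc K)) x = nmul p (nmul (p^K) x)" by (simp only: power_Suc nmul_mult)
  then show ?thesis using assms unfolding Wp_def by simp
qed

lemma Wp_finite_level:
  fixes X :: "'t::ab_group_add set"
  assumes tors: "\<forall>t::'t. \<exists>k. nmul (p^k) t = 0" and fin: "finite X"
  shows "\<exists>k. X \<subseteq> Wp p k"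
  using fin
proof (induct X rule: finite_induct)
  case empty then show ?case by simp
next
  case (insert x X)
  then obtain k where k: "X \<subseteq> Wp p k" by blast
  obtain K where "nmul (p^K) x = 0" using tors by blast
  then have "x \<in> Wp p K" by (rule Wp_level)
  then have "insert x X \<subseteq> Wp p (max k K)"
    using k Wp_mono[of k "max k K" p] Wp_mono[of K "max k K" p] by auto
  then show ?case by blast
qed

lemma partIII:
  fixes T :: "'t::{ab_group_add,countable} itself" and A :: "'a::{ab_group_add,countable} itself"
  assumes pr: "prime p" and tors: "\<forall>t::'t. \<exists>k. nmul (p^k) t = 0"
    and torsA: "\<forall>a::'a. \<exists>k. nmul (p^k) a = 0"
    and red: "reduced TYPE('a)" and unb: "\<not> bounded_grp TYPE('a)"
    and ulm: "(ulm1 :: 't set) \<noteq> {0}"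
  shows "\<exists>c::'t \<times> 't \<Rightarrow> 'a. c \<in> cocycles \<and> locsplit c \<and> c \<notin> coboundaries"
proof -
  have p0: "p > 0" using pr prime_gt_0_nat by blast
  obtain y :: 't where y: "y \<in> ulm1" "y \<noteq> 0" "nmul p y = 0" using exists_y[OF pr tors ulm] by blast
  obtain d :: "nat \<Rightarrow> 'a" where d: "\<forall>k. nmul p (d k) = 0 \<and> d k \<in> range (nmul (p^(Suc k)))"
      "\<forall>\<alpha>. \<exists>k. \<alpha> - (\<Sum>i<k. d i) \<notin> range (nmul (p^k))"
    using nonconv_seq[OF pr torsA red unb] by blast
  have "\<forall>k. \<exists>\<psi>. (\<forall>u\<in>Wp p k. \<forall>v\<in>Wp p k. \<psi> (u + v) = \<psi> u + \<psi> v) \<and> \<psi> y = d k"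
    using hom_exists[OF pr tors y(2,3)] d(1) by blast
  then obtain \<psi> :: "nat \<Rightarrow> 't \<Rightarrow> 'a" where \<psi>: "\<And>k. \<forall>u\<in>Wp p k. \<forall>v\<in>Wp p k. \<psi> k (u + v) = \<psi> k u + \<psi> k v"
      "\<And>k. \<psi> k y = d k"
    by metis
  have \<psi>0: "\<psi> k 0 = 0" for k
    using \<psi>(1)[of k] is_subgroupD(1)[OF Wp_subgroup, of p k] by (metis add_0 add_left_cancel add.right_neutral)
  define \<psi>t where "\<psi>t k x = (if x \<in> Wp p k then \<psi> k x else 0)" for k x
  define \<phi> where "\<phi> k x = (\<Sum>i<k. \<psi>t i x)" for k x
  define dl where "dl f x z = f z - f (x + z) + f x" for f :: "'t \<Rightarrow> 'a" and x z
  have \<phi>0: "\<phi> k 0 = 0" for k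
  proof -
    have "\<psi>t i 0 = 0" for i by (simp add: \<psi>t_def \<psi>0)
    then show ?thesis by (simp add: \<phi>_def)
  qed
  have stepk: "dl (\<phi> (Suc k)) x z = dl (\<phi> k) x z" if "x \<in> Wp p k" "z \<in> Wp p k" for k x z
  proof -
    have xz: "x + z \<in> Wp p k" using that is_subgroupD(2)[OF Wp_subgroup] by blast
    have "dl (\<phi> (Suc k)) x z = dl (\<phi> k) x z + (\<psi>t k z - \<psi>t k (x + z) + \<psi>t k x)"
      by (simp add: dl_def \<phi>_def algebra_simps)
    also have "\<psi>t k z - \<psi>t k (x + z) + \<psi>t k x = 0"
      using that xz \<psi>(1)[of k] by (simp add: \<psi>t_def)
    finally show ?thesis by simp
  qed
  have stable: "dl (\<phi> (k + r)) x z = dl (\<phi> k) x z" if "x \<in> Wp p k" "z \<in> Wp p k" for k r x z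
  proof (induct r)
    case 0 then show ?case by simp
  next
    case (Suc r)
    have "x \<in> Wp p (k + r)" "z \<in> Wp p (k + r)" using that Wp_mono[of k "k + r" p] by auto
    then show ?case using stepk[of x "k + r" z] Suc by simp
  qed
  define L where "L x z = (LEAST k. x \<in> Wp p k \<and> z \<in> Wp p k)" for x z :: 't
  define c where "c = (\<lambda>(x, z). dl (\<phi> (L x z)) x z)"
  have cval: "c (x, z) = dl (\<phi> k) x z" if "x \<in> Wp p k" "z \<in> Wp p k" for x z k
  proof -
    have Lk: "L x z \<le> k" unfolding L_def using that by (simp add: Least_le)
    have "x \<in> Wp p (L x z) \<and> z \<in> Wp p (L x z)" unfolding L_def
      by (rule LeastI[of "\<lambda>k. x \<in> Wp p k \<and> z \<in> Wp p k" k]) (use that in simp)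
    then have "dl (\<phi> (L x z + (k - L x z))) x z = dl (\<phi> (L x z)) x z" using stable by blast
    then show ?thesis using Lk by (simp add: c_def)
  qed
  have lev: "\<exists>k. X \<subseteq> Wp p k" if "finite X" for X :: "'t set"
    using Wp_finite_level[OF tors that] .
  have cz: "c \<in> cocycles"
    unfolding cocycles_def
  proof (intro CollectI conjI allI)
    fix x :: 't
    obtain k where "{x, 0} \<subseteq> Wp p k" using lev[of "{x, 0}"] by auto
    then show "c (x, 0) = 0" using cval[of x k 0] \<phi>0 by (simp add: dl_def)
  next
    fix x z :: 't
    obtain k where "{x, z} \<subseteq> Wp p k" using lev[of "{x, z}"] by auto
    then show "c (x, z) = c (z, x)" using cval[of x k z] cval[of z k x] by (simp add: dl_def add.commute)
  next
    fix x y' z :: 't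
    obtain k where k: "{x, y', z} \<subseteq> Wp p k" using lev[of "{x, y', z}"] by auto
    have s: "x + y' \<in> Wp p k" "y' + z \<in> Wp p k" using k is_subgroupD(2)[OF Wp_subgroup] by auto
    have e: "c (y', z) = dl (\<phi> k) y' z" "c (x + y', z) = dl (\<phi> k) (x + y') z"
      "c (x, y' + z) = dl (\<phi> k) x (y' + z)" "c (x, y') = dl (\<phi> k) x y'"
      using k s by (simp_all add: cval)
    show "c (y', z) - c (x + y', z) + c (x, y' + z) - c (x, y') = 0"
      unfolding e dl_def by (simp add: algebra_simps)
  qed
  have ls: "locsplit c"
    unfolding locsplit_def
  proof (intro allI impI)
    fix F :: "('t \<times> 't) set" assume F: "finite F"
    obtain k where k: "fst ` F \<union> snd ` F \<subseteq> Wp p k" using lev[of "fst ` F \<union> snd ` F"] F by auto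
    show "\<exists>\<phi>'. \<phi>' 0 = 0 \<and> (\<forall>x z. (x, z) \<in> F \<longrightarrow> c (x, z) = \<phi>' z - \<phi>' (x + z) + \<phi>' x)"
    proof (intro exI[of _ "\<phi> k"] conjI allI impI)
      show "\<phi> k 0 = 0" by (rule \<phi>0)
    next
      fix x z assume "(x, z) \<in> F"
      then have "x \<in> Wp p k" "z \<in> Wp p k" using k by force+
      then show "c (x, z) = \<phi> k z - \<phi> k (x + z) + \<phi> k x" using cval by (simp add: dl_def)
    qed
  qed
  have ncb: "c \<notin> coboundaries"
  proof
    assume "c \<in> coboundaries"
    then obtain f where f: "f 0 = 0" "\<And>x z. c (x, z) = f z - f (x + z) + f x"
      unfolding coboundaries_def by blast
    have "f y - (\<Sum>i<k. d i) \<in> range (nmul (p^k))" for k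
    proof -
      define hh where "hh x = f x - \<phi> k x" for x
      have hom: "hh (u + v) = hh u + hh v" if "u \<in> Wp p k" "v \<in> Wp p k" for u v
        using f(2)[of u v] cval[OF that] by (simp add: hh_def dl_def algebra_simps)
      have hh0: "hh 0 = 0" by (simp add: hh_def f(1) \<phi>0)
      have hhn: "hh (nmul n z) = nmul n (hh z)" if "z \<in> Wp p k" for n z
      proof (induct n)
        case 0 then show ?case by (simp add: hh0)
      next
        case (Suc n)
        have "nmul n z \<in> Wp p k" using that subgroup_nmul[OF Wp_subgroup] by blast
        then show ?case using hom[OF that] Suc by simp
      qed
      obtain z where z: "nmul (p^k) z = y" using ulm1_div[OF y(1) p0] by blast
      have "nmul (p^(Suc k)) z = nmul p (nmul (p^k) z)" by (simp only: power_Suc nmul_mult)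
      then have zW: "z \<in> Wp p k" using z y(3) unfolding Wp_def by simp
      have "hh y = nmul (p^k) (hh z)" using hhn[OF zW, of "p^k"] z by simp
      moreover have "hh y = f y - (\<Sum>i<k. d i)"
      proof -
        have "\<psi>t i y = d i" for i using Wp_py[OF y(3)] \<psi>(2) by (simp add: \<psi>t_def)
        then show ?thesis by (simp add: hh_def \<phi>_def)
      qed
      ultimately show ?thesis by (metis rangeI)
    qed
    then show False using d(2) by blast
  qed
  show ?thesis using cz ls ncb by blast
qed


theorem lemma4p21:
  fixes p :: nat
  assumes "p_group p TYPE('t::{ab_group_add, countable})"
      and "p_group p TYPE('a::{ab_group_add, countable})"
      and "reduced TYPE('a)"
  shows "Ext_polish TYPE('t) TYPE('a) \<longleftrightarrow> (ulm1 :: 't set) = {0} \<or> bounded_grp TYPE('a)"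
proof -
  have pr: "prime p" and tors: "\<forall>x::'t. \<exists>k. nmul (p ^ k) x = 0"
    using assms(1) unfolding p_group_def by auto
  have torsA: "\<forall>x::'a. \<exists>k. nmul (p ^ k) x = 0"
    using assms(2) unfolding p_group_def by auto
  show ?thesis
  proof
    assume E: "Ext_polish TYPE('t) TYPE('a)"
    show "(ulm1 :: 't set) = {0} \<or> bounded_grp TYPE('a)"
    proof (rule ccontr)
      assume "\<not> ((ulm1 :: 't set) = {0} \<or> bounded_grp TYPE('a))"
      then have u: "(ulm1 :: 't set) \<noteq> {0}" and b: "\<not> bounded_grp TYPE('a)" by auto
      obtain c :: "'t \<times> 't \<Rightarrow> 'a" where c: "c \<in> cocycles" "locsplit c" "c \<notin> coboundaries"
        using partIII[OF pr tors torsA assms(3) b u] by blast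
      then show False using E unfolding Ext_polish_iff by blast
    qed
  next
    assume H: "(ulm1 :: 't set) = {0} \<or> bounded_grp TYPE('a)"
    show "Ext_polish TYPE('t) TYPE('a)"
      unfolding Ext_polish_iff
    proof (intro allI impI)
      fix c :: "'t \<times> 't \<Rightarrow> 'a" assume cz: "c \<in> cocycles" and ls: "locsplit c"
      show "c \<in> coboundaries"
        using H partI[OF pr tors _ cz ls] partII[OF pr tors torsA _ cz ls] by blast
    qed
  qed
qed

end
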